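(* Suppose the reduced gyroscopic two-form is exact, $\mathbf f=d\mathbf a$ with $\mathbf a=\sum_ia_i(x)dx_i$, and let $l_1(x,\dot x)=\frac12\sum g_{ij}\dot x_i\dot x_j+\sum_ia_i\dot x_i-v(x)$. Let $\mathcal N(x)$ be a nowhere vanishing function on $S$, $d\tau=\mathcal N(x)dt$, $x'=dx/d\tau$, and $l_1^*(x,x')=\frac12\sum\mathcal N^2g_{ij}x'_ix'_j+\sum_i\mathcal N a_ix'_i-v(x)$. Then the equations $$\frac{d}{dt}\frac{\partial l_1}{\partial\dot x_i}=\frac{\partial l_1}{\partial x_i}+\sum_{k,l,j=1}^nC^k_{ij}(x)g_{kl}\dot x_l\dot x_j,\qquad i=1,\dots,n,$$ after the time reparametrization $d\tau=\mathcal N dt$ become the Lagrangian system $\frac{d}{d\tau}\frac{\partial l_1^*}{\partial x'_i}=\frac{\partial l_1^*}{\partial x_i}$ ($i=1,\dots,n$) if and only if (a) $\mathcal N$ is a Chaplygin reducing multiplier for the corresponding system without the linear term, i.e. the equations $\frac{d}{dt}\frac{\partial l}{\partial\dot x_i}=\frac{\partial l}{\partial x_i}+\sum_{k,l,j}C^k_{ij}g_{kl}\dot x_l\dot x_j$ with $l=\frac12\sum g_{ij}\dot x_i\dot x_j-v$ become, after $d\tau=\mathcal N dt$, the Lagrangian system $\frac{d}{d\tau}\frac{\partial l^*}{\partial x'_i}=\frac{\partial l^*}{\partial x_i}$ with $l^*(x,x')=\frac12\sum\mathcal N^2g_{ij}x'_ix'_j-v(x)$; and (b) $d\mathcal N\wedge\mathbf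 a=0$, i.e. $a_j\frac{\partial\mathcal N}{\partial x_i}=a_i\frac{\partial\mathcal N}{\partial x_j}$ for all $i,j$.
   Context: Setting: $S$ ($\dim S=n$) is the base of a gyroscopic $G$–Chaplygin system $(Q,L,\mathcal D,G,\mathbf F)$: $G$ acts freely on $Q$, $\pi\colon Q\to S=Q/G$, $L=\frac12\mathbf G(\dot q,\dot q)-V$ with $G$-invariant $\mathbf G,V$, $\mathbf F$ a $G$-invariant two-form, $\mathcal D$ a $G$-invariant distribution complementary to $\ker d\pi$. Reduced data: metric $\mathbf g(X,Y)=\mathbf G(X^h,Y^h)$ (local components $g_{ij}$), potential $v$ with $v\circ\pi=V$, two-form $\mathbf f(X,Y)=\mathbf F(X^h,Y^h)$, where $X^h\in\mathcal D$ is the horizontal lift; $\Sigma(X,Y,Z)=\mathbf G(X^h,B(Y^h,Z^h))$ with $B(X,Y)=-A([X^h,Y^h])$ the curvature ($A$ the vertical projection along $\mathcal D$), and the $(1,2)$-tensor $\mathbf C$ defined by $\Sigma(X,Y,Z)=\mathbf g(X,\mathbf C(Y,Z))$, with local components $\mathbf C(\partial_i,\partial_j)=\sum_kC^k_{ij}\partial_k$. Everything is in local coordinates $x=(x_1,\dots,x_n)$ on $S$; "the equations become" means that $t\mapsto x(t)$ solves the first system iff $\tau\mapsto x(t(\tau))$ solves the second. *)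

theory Defs
  imports "HOL-Analysis.Analysis"
begin

text \<open>Local coordinates x = (x_1,...,x_n) on an open chart domain U of S are modelled
  as vectors of type real^'n. Positions and velocities are both real^'n.\<close>

definition pd :: "(real^'n \<Rightarrow> real) \<Rightarrow> real^'n \<Rightarrow> 'n \<Rightarrow> real" where
  "pd f x i = deriv (\<lambda>s. f (x + s *\<^sub>R axis i 1)) 0"

text \<open>Smoothness (C-infinity) on U: there is a family D of functions indexed by lists of
  coordinate directions, D [] = f on U, and every D ds is (Frechet) differentiable at every
  point of U with partial derivatives D (i # ds).\<close>
definition smooth_on :: "(real^'n) set \<Rightarrow> (real^'n \<Rightarrow> real) \<Rightarrow> bool" where
  "smooth_on U f \<longleftrightarrow>
     (\<exists>D :: 'n list \<Rightarrow> real^'n \<Rightarrow> real.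
        (\<forall>x\<in>U. D [] x = f x) \<and>
        (\<forall>ds. \<forall>x\<in>U. (D ds has_derivative (\<lambda>h. \<Sum>i\<in>UNIV. h $ i * D (i # ds) x)) (at x)))"

definition pdq :: "(real^'n \<Rightarrow> real^'n \<Rightarrow> real) \<Rightarrow> real^'n \<Rightarrow> real^'n \<Rightarrow> 'n \<Rightarrow> real" where
  "pdq L q p i = pd (\<lambda>q'. L q' p) q i"

definition pdp :: "(real^'n \<Rightarrow> real^'n \<Rightarrow> real) \<Rightarrow> real^'n \<Rightarrow> real^'n \<Rightarrow> 'n \<Rightarrow> real" where
  "pdp L q p i = pd (\<lambda>p'. L q p') p i"

definition EL_solution ::
  "(real^'n \<Rightarrow> real^'n \<Rightarrow> real) \<Rightarrow> (real^'n \<Rightarrow> real^'n \<Rightarrow> 'n \<Rightarrow> real)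
     \<Rightarrow> real set \<Rightarrow> (real \<Rightarrow> real^'n) \<Rightarrow> bool" where
  "EL_solution L F I x \<longleftrightarrow>
     (\<forall>t\<in>I. x differentiable at t) \<and>
     (\<forall>t\<in>I. \<forall>i.
        ((\<lambda>s. pdp L (x s) (vector_derivative x (at s)) i) has_real_derivative
           (pdq L (x t) (vector_derivative x (at t)) i + F (x t) (vector_derivative x (at t)) i))
        (at t))"

text \<open>"The equations d/dt dL/dxdot = dL/dx + F become, after d tau = N dt, the Lagrangian
  system with Lagrangian Ls": for every open interval I, every curve x in U on I, every
  tau = sigma(t) with d sigma/dt = N(x(t)), and y the curve x expressed in the time tau
  (y(sigma t) = x t), x solves the first system on I iff y solves the Lagrangian system of Ls
  on sigma ` I.\<close>
definition becomes ::
  "(real^'n) set \<Rightarrow> (real^'n \<Rightarrow> real) \<Rightarrow> (real^'n \<Rightarrow> real^'n \<Rightarrow> real)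
     \<Rightarrow> (real^'n \<Rightarrow> real^'n \<Rightarrow> 'n \<Rightarrow> real) \<Rightarrow> (real^'n \<Rightarrow> real^'n \<Rightarrow> real) \<Rightarrow> bool" where
  "becomes U N L F Ls \<longleftrightarrow>
     (\<forall>(I :: real set) (x :: real \<Rightarrow> real^'n) (\<sigma> :: real \<Rightarrow> real) (y :: real \<Rightarrow> real^'n).
        is_interval I \<and> open I \<and> x ` I \<subseteq> U \<and>
        (\<forall>t\<in>I. (\<sigma> has_real_derivative N (x t)) (at t)) \<and>
        (\<forall>t\<in>I. y (\<sigma> t) = x t)
        \<longrightarrow> (EL_solution L F I x \<longleftrightarrow> EL_solution Ls (\<lambda>_ _ _. 0) (\<sigma> ` I) y))"

text \<open>Gyroscopic force term: sum_{k,l,j} C^k_{ij}(x) g_{kl}(x) xdot_l xdot_j,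
  with C x k i j = C^k_{ij}(x) and g x i j = g_{ij}(x).\<close>
definition gyro_force ::
  "(real^'n \<Rightarrow> 'n \<Rightarrow> 'n \<Rightarrow> 'n \<Rightarrow> real) \<Rightarrow> (real^'n \<Rightarrow> 'n \<Rightarrow> 'n \<Rightarrow> real)
     \<Rightarrow> real^'n \<Rightarrow> real^'n \<Rightarrow> 'n \<Rightarrow> real" where
  "gyro_force C g q p i = (\<Sum>k\<in>UNIV. \<Sum>l\<in>UNIV. \<Sum>j\<in>UNIV. C q k i j * g q k l * p $ l * p $ j)"

definition lag1 ::
  "(real^'n \<Rightarrow> 'n \<Rightarrow> 'n \<Rightarrow> real) \<Rightarrow> (real^'n \<Rightarrow> 'n \<Rightarrow> real) \<Rightarrow> (real^'n \<Rightarrow> real)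
     \<Rightarrow> real^'n \<Rightarrow> real^'n \<Rightarrow> real" where
  "lag1 g a v q p = (1/2) * (\<Sum>i\<in>UNIV. \<Sum>j\<in>UNIV. g q i j * p $ i * p $ j)
                    + (\<Sum>i\<in>UNIV. a q i * p $ i) - v q"

definition lag1_star ::
  "(real^'n \<Rightarrow> real) \<Rightarrow> (real^'n \<Rightarrow> 'n \<Rightarrow> 'n \<Rightarrow> real) \<Rightarrow> (real^'n \<Rightarrow> 'n \<Rightarrow> real)
     \<Rightarrow> (real^'n \<Rightarrow> real) \<Rightarrow> real^'n \<Rightarrow> real^'n \<Rightarrow> real" where
  "lag1_star N g a v q p = (1/2) * (\<Sum>i\<in>UNIV. \<Sum>j\<in>UNIV. (N q)^2 * g q i j * p $ i * p $ j)
                    + (\<Sum>i\<in>UNIV. N q * a q i * p $ i) - v q"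

definition chaplygin_multiplier ::
  "(real^'n) set \<Rightarrow> (real^'n \<Rightarrow> 'n \<Rightarrow> 'n \<Rightarrow> real) \<Rightarrow> (real^'n \<Rightarrow> real)
     \<Rightarrow> (real^'n \<Rightarrow> 'n \<Rightarrow> 'n \<Rightarrow> 'n \<Rightarrow> real) \<Rightarrow> (real^'n \<Rightarrow> real) \<Rightarrow> bool" where
  "chaplygin_multiplier U g v C N \<longleftrightarrow>
     becomes U N (lag1 g (\<lambda>_ _. 0) v) (gyro_force C g) (lag1_star N g (\<lambda>_ _. 0) v)"

end

theory Submission
  imports Defs "HOL-Analysis.Analysis"
begin

lemma picard_global:
  fixes \<Psi> :: "'a::euclidean_space \<Rightarrow> 'a"
  assumes lip: "\<And>a b. norm (\<Psi> a - \<Psi> b) \<le> L * norm (a - b)"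
    and bnd: "\<And>a. norm (\<Psi> a) \<le> M"
    and hpos: "h > 0" and L0: "L \<ge> 0" and M0: "M \<ge> 0" and hL: "3*h*L \<le> 1/2"
  shows "\<exists>z. z 0 = z0 \<and> (\<forall>t\<in>{-h<..<h}. (z has_vector_derivative \<Psi> (z t)) (at t)
                 \<and> norm (z t - z0) \<le> 3*h*M)"
proof -
  have contPsi: "continuous_on UNIV \<Psi>"
  proof (rule continuous_on_subset[OF lipschitz_on_continuous_on[of L]])
    show "L-lipschitz_on UNIV \<Psi>" using lip L0 by (auto intro!: lipschitz_onI simp: dist_norm)
  qed auto
  define cl where "cl t = max (-h) (min h t)" for t :: real
  have cl_in: "cl t \<in> {-h..h}" for t unfolding cl_def using hpos by auto
  have cl_cont: "continuous_on UNIV cl" unfolding cl_def by (intro continuous_intros)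
  define Tf where "Tf u t = z0 + integral {-h..cl t} (\<lambda>s. \<Psi> (apply_bcontfun u s))
      - integral {-h..0} (\<lambda>s. \<Psi> (apply_bcontfun u s))" for u :: "real \<Rightarrow>\<^sub>C 'a" and t
  have contc: "continuous_on S (\<lambda>s. \<Psi> (apply_bcontfun u s))" for u :: "real \<Rightarrow>\<^sub>C 'a" and S
    by (rule continuous_on_compose2[OF contPsi]) auto
  have intg: "(\<lambda>s. \<Psi> (apply_bcontfun u s)) integrable_on {a..b}" for u :: "real \<Rightarrow>\<^sub>C 'a" and a b
    by (rule integrable_continuous_real[OF contc])
  have ib: "norm (integral {-h..c} (\<lambda>s. \<Psi> (apply_bcontfun u s))) \<le> M * (c + h)"
    if "c \<in> {-h..h}" for u :: "real \<Rightarrow>\<^sub>C 'a" and c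
    using integral_bound[of "-h" c "\<lambda>s. \<Psi> (apply_bcontfun u s)" M] that contc bnd by auto
  have Tf_bc: "Tf u \<in> bcontfun" for u
  proof (rule bcontfun_normI)
    have "continuous_on UNIV (\<lambda>t. integral {-h..cl t} (\<lambda>s. \<Psi> (apply_bcontfun u s)))"
      by (rule continuous_on_compose2[OF indefinite_integral_continuous_1[OF intg[of u "-h" h]] cl_cont])
        (use cl_in in auto)
    then show "continuous_on UNIV (Tf u)" unfolding Tf_def by (intro continuous_intros)
    fix t
    have "norm (Tf u t) \<le> norm z0 + norm (integral {-h..cl t} (\<lambda>s. \<Psi> (apply_bcontfun u s)))
        + norm (integral {-h..0} (\<lambda>s. \<Psi> (apply_bcontfun u s)))"
      unfolding Tf_def by (rule order_trans[OF norm_triangle_ineq4]) (simp add: norm_triangle_ineq)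
    also have "\<dots> \<le> norm z0 + M * (cl t + h) + M * (0 + h)"
      using ib[OF cl_in] ib[of 0] hpos by (intro add_mono) auto
    also have "\<dots> \<le> norm z0 + 3 * h * M" using cl_in[of t] M0 mult_left_mono[of "cl t + h" "2*h" M]
      by (simp add: algebra_simps)
    finally show "norm (Tf u t) \<le> norm z0 + 3 * h * M" .
  qed
  define T where "T u = Bcontfun (Tf u)" for u
  have T_app: "apply_bcontfun (T u) = Tf u" for u
    unfolding T_def using Tf_bc by (simp add: Bcontfun_inverse)
  have idiff: "norm (integral {-h..c} (\<lambda>s. \<Psi> (apply_bcontfun u s))
      - integral {-h..c} (\<lambda>s. \<Psi> (apply_bcontfun v s))) \<le> L * dist u v * (c + h)"
    if "c \<in> {-h..h}" for u v :: "real \<Rightarrow>\<^sub>C 'a" and c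
  proof -
    have "integral {-h..c} (\<lambda>s. \<Psi> (apply_bcontfun u s))
      - integral {-h..c} (\<lambda>s. \<Psi> (apply_bcontfun v s))
      = integral {-h..c} (\<lambda>s. \<Psi> (apply_bcontfun u s) - \<Psi> (apply_bcontfun v s))"
      by (rule integral_diff[symmetric]) (auto intro: intg)
    also have "norm \<dots> \<le> L * dist u v * (c - - h)"
    proof (rule integral_bound)
      show "continuous_on {- h..c} (\<lambda>s. \<Psi> (apply_bcontfun u s) - \<Psi> (apply_bcontfun v s))"
        using contc by (intro continuous_intros) auto
      fix t
      have "norm (\<Psi> (apply_bcontfun u t) - \<Psi> (apply_bcontfun v t))
          \<le> L * norm (apply_bcontfun u t - apply_bcontfun v t)" by (rule lip)
      also have "\<dots> \<le> L * dist u v" using dist_bounded[of u t v] L0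
        by (auto simp: dist_norm intro: mult_left_mono)
      finally show "norm (\<Psi> (apply_bcontfun u t) - \<Psi> (apply_bcontfun v t)) \<le> L * dist u v" .
    qed (use that in auto)
    finally show ?thesis by simp
  qed
  have contr: "dist (T u) (T v) \<le> (3*h*L) * dist u v" for u v
  proof (rule dist_bound)
    fix t
    have "dist (T u t) (T v t) = norm ((integral {-h..cl t} (\<lambda>s. \<Psi> (apply_bcontfun u s))
      - integral {-h..cl t} (\<lambda>s. \<Psi> (apply_bcontfun v s)))
      - (integral {-h..0} (\<lambda>s. \<Psi> (apply_bcontfun u s))
      - integral {-h..0} (\<lambda>s. \<Psi> (apply_bcontfun v s))))"
      unfolding T_app Tf_def dist_norm by (simp add: algebra_simps)
    also have "\<dots> \<le> L * dist u v * (cl t + h) + L * dist u v * (0 + h)"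
    proof -
      have a: "norm (integral {-h..cl t} (\<lambda>s. \<Psi> (apply_bcontfun u s))
      - integral {-h..cl t} (\<lambda>s. \<Psi> (apply_bcontfun v s))) \<le> L * dist u v * (cl t + h)"
        by (rule idiff[OF cl_in])
      have b: "norm (integral {-h..0} (\<lambda>s. \<Psi> (apply_bcontfun u s))
      - integral {-h..0} (\<lambda>s. \<Psi> (apply_bcontfun v s))) \<le> L * dist u v * (0 + h)"
        by (rule idiff) (use hpos in auto)
      then show ?thesis using a by (intro order_trans[OF norm_triangle_ineq4]) linarith
    qed
    also have "\<dots> \<le> (3*h*L) * dist u v"
    proof -
      have "0 \<le> L * dist u v" using L0 by simp
      then have "L * dist u v * (cl t + h) \<le> L * dist u v * (2*h)"
        using cl_in[of t] by (intro mult_left_mono) auto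
      then show ?thesis by (simp add: algebra_simps)
    qed
    finally show "dist (T u t) (T v t) \<le> (3*h*L) * dist u v" .
  qed
  obtain w where w: "T w = w"
    using banach_fix_type[of "3*h*L" T] contr hL hpos L0 by auto
  define z where "z = apply_bcontfun w"
  have zT: "z t = Tf w t" for t unfolding z_def by (metis T_app w)
  show ?thesis
  proof (intro exI conjI ballI)
    show "z 0 = z0" unfolding zT Tf_def cl_def using hpos by simp
    fix t assume t: "t \<in> {-h<..<h}"
    have clt: "cl s = s" if "s \<in> {-h<..<h}" for s using that unfolding cl_def by auto
    have "((\<lambda>s. integral {-h..s} (\<lambda>s. \<Psi> (z s))) has_vector_derivative \<Psi> (z t)) (at t within {-h..h})"
      by (rule integral_has_vector_derivative) (use t contc z_def in auto)
    then have "((\<lambda>s. integral {-h..s} (\<lambda>s. \<Psi> (z s))) has_vector_derivative \<Psi> (z t)) (at t)"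
      using t by (subst (asm) at_within_interior[of t]) auto
    then have d: "((\<lambda>s. z0 + integral {-h..s} (\<lambda>s. \<Psi> (z s)) - integral {-h..0} (\<lambda>s. \<Psi> (z s)))
        has_vector_derivative \<Psi> (z t)) (at t)"
      by (auto intro!: derivative_eq_intros)
    show "(z has_vector_derivative \<Psi> (z t)) (at t)"
    proof (rule has_vector_derivative_transform_within_open[OF d _ t])
      show "open {-h<..<h::real}" by simp
      show "\<And>s. s \<in> {- h<..<h} \<Longrightarrow> z0 + integral {- h..s} (\<lambda>s. \<Psi> (z s)) - integral {- h..0} (\<lambda>s. \<Psi> (z s)) = z s"
      proof -
        fix s assume s: "s \<in> {- h<..<h}"
        show "z0 + integral {- h..s} (\<lambda>s. \<Psi> (z s)) - integral {- h..0} (\<lambda>s. \<Psi> (z s)) = z s"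
          using zT[of s] clt[OF s] by (simp add: Tf_def z_def)
      qed
    qed
    have "norm (z t - z0) \<le> norm (integral {-h..cl t} (\<lambda>s. \<Psi> (z s)))
        + norm (integral {-h..0} (\<lambda>s. \<Psi> (z s)))"
      using zT[of t] norm_triangle_ineq4[of "integral {-h..cl t} (\<lambda>s. \<Psi> (z s))" "integral {-h..0} (\<lambda>s. \<Psi> (z s))"]
      by (simp add: Tf_def z_def)
    also have "\<dots> \<le> M * (cl t + h) + M * (0 + h)"
      using ib[OF cl_in] ib[of 0] hpos unfolding z_def by (intro add_mono) auto
    also have "\<dots> \<le> 3 * h * M" using cl_in[of t] M0 mult_left_mono[of "cl t + h" "2*h" M]
      by (simp add: algebra_simps)
    finally show "norm (z t - z0) \<le> 3*h*M" .
  qed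
qed


lemma picard_local:
  fixes \<Psi> :: "'a::euclidean_space \<Rightarrow> 'a"
  assumes r: "r > 0" and L0: "L \<ge> 0"
    and lip: "\<And>a b. a \<in> cball z0 r \<Longrightarrow> b \<in> cball z0 r \<Longrightarrow> norm (\<Psi> a - \<Psi> b) \<le> L * norm (a - b)"
  shows "\<exists>h>0. \<exists>z. z 0 = z0 \<and> (\<forall>t\<in>{-h<..<h}. z t \<in> cball z0 r \<and> (z has_vector_derivative \<Psi> (z t)) (at t))"
proof -
  define P where "P = closest_point (cball z0 r)"
  have Pin: "P a \<in> cball z0 r" for a unfolding P_def
    by (rule closest_point_in_set) (use r in auto)
  have Plip: "norm (P a - P b) \<le> norm (a - b)" for a b
    using closest_point_lipschitz[of "cball z0 r" a b] r unfolding P_def dist_norm by auto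
  have Pid: "P a = a" if "a \<in> cball z0 r" for a unfolding P_def by (rule closest_point_self[OF that])
  define M where "M = norm (\<Psi> z0) + L * r"
  have M0: "M \<ge> 0" unfolding M_def using L0 r by auto
  have lip2: "norm (\<Psi> (P a) - \<Psi> (P b)) \<le> L * norm (a - b)" for a b
    using lip[OF Pin Pin, of a b] Plip[of a b] L0 by (meson mult_left_mono order_trans)
  have bnd: "norm (\<Psi> (P a)) \<le> M" for a
  proof -
    have "norm (\<Psi> (P a) - \<Psi> z0) \<le> L * norm (P a - z0)" using lip[OF Pin, of z0 a] r by auto
    also have "\<dots> \<le> L * r" using Pin[of a] L0 by (intro mult_left_mono) (auto simp: dist_norm norm_minus_commute)
    finally show ?thesis unfolding M_def by (metis add.commute norm_triangle_sub order_trans add_left_mono)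
  qed
  define h where "h = min (1 / (6 * (L + 1))) (r / (3 * (M + 1)))"
  have hpos: "h > 0" unfolding h_def using L0 M0 r by auto
  have hL: "3*h*L \<le> 1/2"
  proof -
    have "3*h*L \<le> 3 * (1 / (6 * (L + 1))) * L" unfolding h_def using L0 by (intro mult_right_mono) auto
    also have "\<dots> \<le> 1/2" using L0 by (simp add: field_simps)
    finally show ?thesis .
  qed
  have hM: "3*h*M \<le> r"
  proof -
    have "3*h*M \<le> 3 * (r / (3 * (M + 1))) * M" unfolding h_def using M0 by (intro mult_right_mono) auto
    also have "\<dots> \<le> r" using M0 r by (simp add: field_simps)
    finally show ?thesis .
  qed
  obtain z where z0: "z 0 = z0" and z: "\<And>t. t\<in>{-h<..<h} \<Longrightarrow>
      (z has_vector_derivative \<Psi> (P (z t))) (at t) \<and> norm (z t - z0) \<le> 3*h*M"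
    using picard_global[of "\<lambda>a. \<Psi> (P a)" L M h z0, OF lip2 bnd hpos L0 M0 hL] by blast
  show ?thesis
  proof (intro exI[of _ h] conjI hpos exI[of _ z] z0 ballI)
    fix t assume t: "t \<in> {-h<..<h}"
    show zin: "z t \<in> cball z0 r" using z[OF t] hM by (auto simp: dist_norm norm_minus_commute)
    show "(z has_vector_derivative \<Psi> (z t)) (at t)" using z[OF t] Pid[OF zin] by simp
  qed
qed

lemma time_change:
  fixes \<sigma> d :: "real \<Rightarrow> real" and I :: "real set"
  assumes Iopen: "open I" and Iint: "is_interval I"
    and der: "\<And>t. t \<in> I \<Longrightarrow> (\<sigma> has_real_derivative d t) (at t)"
    and dnz: "\<And>t. t \<in> I \<Longrightarrow> d t \<noteq> 0"
  shows "inj_on \<sigma> I" and "open (\<sigma> ` I)"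
    and "\<And>t. t \<in> I \<Longrightarrow> (inv_into I \<sigma> has_real_derivative (1 / d t)) (at (\<sigma> t))"
proof -
  have cont: "continuous_on I \<sigma>"
    using der by (auto intro!: continuous_at_imp_continuous_on DERIV_isCont)
  show inj: "inj_on \<sigma> I"
  proof (rule inj_onI, rule ccontr)
    fix a b assume a: "a \<in> I" and b: "b \<in> I" and eq: "\<sigma> a = \<sigma> b" and ne: "a \<noteq> b"
    {
      fix a b assume a: "a \<in> I" and b: "b \<in> I" and eq: "\<sigma> a = \<sigma> b" and lt: "a < b"
      have sub: "{a..b} \<subseteq> I"
      proof
        fix x assume "x \<in> {a..b}"
        then show "x \<in> I" using Iint a b unfolding is_interval_1 by (meson atLeastAtMost_iff)
      qed
      have dd: "(\<sigma> has_derivative (\<lambda>v. d x * v)) (at x)" if "a < x" "x < b" for x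
        using der[of x] subsetD[OF sub, of x] that unfolding has_field_derivative_def by auto
      obtain c where c: "a < c" "c < b" "(\<lambda>v. d c * v) = (\<lambda>v. 0)"
        using Rolle_deriv[OF lt eq continuous_on_subset[OF cont sub] dd] by blast
      have "d c = 0" using fun_cong[OF c(3), of 1] by simp
      then have False using dnz[of c] subsetD[OF sub, of c] c by auto
    }
    note * = this
    show False
    proof (cases "a < b")
      case True then show ?thesis using *[OF a b eq] by blast
    next
      case False then have "b < a" using ne by auto
      then show ?thesis using *[OF b a eq[symmetric]] by blast
    qed
  qed
  show "open (\<sigma> ` I)"
    by (rule injective_into_1d_imp_open_map_UNIV[OF Iopen cont inj order_refl])
  fix t assume t: "t \<in> I"
  have "(inv_into I \<sigma> has_derivative (*) (1 / d t)) (at (\<sigma> t))"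
  proof (rule has_derivative_inverse_strong[OF Iopen t cont])
    show "\<And>x. x \<in> I \<Longrightarrow> inv_into I \<sigma> (\<sigma> x) = x" using inj by simp
    show "(\<sigma> has_derivative (\<lambda>x. d t * x)) (at t)" using der[OF t] by (simp add: has_field_derivative_def)
    show "(\<lambda>x. d t * x) \<circ> (*) (1 / d t) = id" using dnz[OF t] by (auto simp: fun_eq_iff)
  qed
  then show "(inv_into I \<sigma> has_real_derivative (1 / d t)) (at (\<sigma> t))"
    by (simp only: has_field_derivative_def)
qed

lemma pd_from_deriv:
  fixes f :: "real^'n \<Rightarrow> real"
  assumes "(f has_derivative f') (at x)"
  shows "pd f x i = f' (axis i 1)"
proof -
  have lin: "linear f'" using assms has_derivative_linear by blast
  have "((\<lambda>s. x + s *\<^sub>R axis i 1) has_derivative (\<lambda>s. s *\<^sub>R axis i 1)) (at 0)"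
    by (auto intro!: derivative_eq_intros)
  from has_derivative_compose[OF this, of f f'] assms
  have "((\<lambda>s. f (x + s *\<^sub>R axis i 1)) has_derivative (\<lambda>s. f' (s *\<^sub>R axis i 1))) (at 0)" by simp
  moreover have "(\<lambda>s. f' (s *\<^sub>R axis i 1)) = (*) (f' (axis i 1))"
    using linear_scale[OF lin] by (auto simp: fun_eq_iff)
  ultimately have "((\<lambda>s. f (x + s *\<^sub>R axis i 1)) has_real_derivative (f' (axis i 1))) (at 0)"
    by (simp add: has_field_derivative_def)
  then show ?thesis unfolding pd_def by (rule DERIV_imp_deriv)
qed

lemma sum_axis_mult: "(\<Sum>j\<in>UNIV. axis i (1::real) $ j * c j) = c i"
proof -
  have "axis i (1::real) $ j * c j = (if j = i then c j else 0)" for j by (simp add: axis_def)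
  then show ?thesis by simp
qed

lemma smooth_onE:
  assumes "smooth_on U f" "open U"
  obtains D where "\<And>x. x \<in> U \<Longrightarrow> D [] x = f x"
    "\<And>ds x. x \<in> U \<Longrightarrow> (D ds has_derivative (\<lambda>h. \<Sum>i\<in>UNIV. h $ i * D (i # ds) x)) (at x)"
  using assms unfolding smooth_on_def by blast

lemma smooth_pd_eq:
  assumes sm: "smooth_on U f" and U: "open U" and x: "x \<in> U"
    and D: "\<And>x. x \<in> U \<Longrightarrow> D [] x = f x"
    "\<And>ds x. x \<in> U \<Longrightarrow> (D ds has_derivative (\<lambda>h. \<Sum>i\<in>UNIV. h $ i * D (i # ds) x)) (at x)"
  shows "(f has_derivative (\<lambda>h. \<Sum>i\<in>UNIV. h $ i * D [i] x)) (at x)" and "pd f x i = D [i] x"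
proof -
  show *: "(f has_derivative (\<lambda>h. \<Sum>i\<in>UNIV. h $ i * D [i] x)) (at x)"
    by (rule has_derivative_transform_within_open[OF D(2)[of x "[]"] U x]) (use D(1) x in auto)
  show "pd f x i = D [i] x" using pd_from_deriv[OF *, of i] by (simp add: sum_axis_mult)
qed

lemma smooth_has_derivative:
  fixes f :: "real^'n \<Rightarrow> real"
  assumes "smooth_on U f" "open U" "x \<in> U"
  shows "(f has_derivative (\<lambda>h. \<Sum>i\<in>UNIV. h $ i * pd f x i)) (at x)"
proof -
  obtain D where D: "\<And>x. x \<in> U \<Longrightarrow> D [] x = f x"
    "\<And>ds x. x \<in> U \<Longrightarrow> (D ds has_derivative (\<lambda>h. \<Sum>i\<in>UNIV. h $ i * D (i # ds) x)) (at x)"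
    using smooth_onE[OF assms(1,2)] by blast
  show ?thesis using smooth_pd_eq[OF assms D] by simp
qed

lemma smooth_pd:
  fixes f :: "real^'n \<Rightarrow> real"
  assumes "smooth_on U f" "open U"
  shows "smooth_on U (\<lambda>x. pd f x i)"
proof -
  obtain D where D: "\<And>x. x \<in> U \<Longrightarrow> D [] x = f x"
    "\<And>ds x. x \<in> U \<Longrightarrow> (D ds has_derivative (\<lambda>h. \<Sum>i\<in>UNIV. h $ i * D (i # ds) x)) (at x)"
    using smooth_onE[OF assms(1,2)] by blast
  show ?thesis unfolding smooth_on_def
  proof (intro exI[of _ "\<lambda>ds. D (ds @ [i])"] conjI ballI allI)
    fix x assume "x \<in> U"
    then show "D ([] @ [i]) x = pd f x i" using smooth_pd_eq[OF assms \<open>x \<in> U\<close> D] by simp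
  next
    fix ds x assume "x \<in> U"
    then show "(D (ds @ [i]) has_derivative (\<lambda>h. \<Sum>j\<in>UNIV. h $ j * D ((j # ds) @ [i]) x)) (at x)"
      using D(2)[of x "ds @ [i]"] by simp
  qed
qed

lemma smooth_cont:
  fixes f :: "real^'n \<Rightarrow> real"
  assumes "smooth_on U f" "open U"
  shows "continuous_on U f"
  using smooth_has_derivative[OF assms]
  by (meson continuous_at_imp_continuous_on has_derivative_continuous)

lemma smooth_zero: "smooth_on U (\<lambda>x. 0)"
  unfolding smooth_on_def by (intro exI[of _ "\<lambda>_ _. 0"]) (auto intro!: derivative_eq_intros)

lemma smooth_lip:
  fixes f :: "real^'n \<Rightarrow> real"
  assumes sm: "smooth_on U f" and U: "open U" and x0: "x0 \<in> U"
  shows "\<exists>e>0. cball x0 e \<subseteq> U \<and> (\<exists>L. \<forall>a\<in>cball x0 e. \<forall>b\<in>cball x0 e. \<bar>f a - f b\<bar> \<le> L * dist a b)"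
proof -
  obtain e where e: "e > 0" "cball x0 e \<subseteq> U" using U x0 open_contains_cball by blast
  have "\<exists>B. \<forall>a\<in>cball x0 e. \<bar>pd f a i\<bar> \<le> B" for i
  proof -
    have "continuous_on (cball x0 e) (\<lambda>x. pd f x i)"
      using smooth_cont[OF smooth_pd[OF sm U] U] e(2) continuous_on_subset by blast
    then have "compact ((\<lambda>x. pd f x i) ` cball x0 e)" by (rule compact_continuous_image) simp
    then obtain B where "\<forall>y\<in>(\<lambda>x. pd f x i) ` cball x0 e. norm y \<le> B"
      using compact_imp_bounded bounded_iff by metis
    then show ?thesis by auto
  qed
  then obtain B where B: "\<And>i a. a \<in> cball x0 e \<Longrightarrow> \<bar>pd f a i\<bar> \<le> B i" by metis
  define L where "L = (\<Sum>i\<in>UNIV. B i)"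
  have "\<bar>f a - f b\<bar> \<le> L * dist a b" if a: "a \<in> cball x0 e" and b: "b \<in> cball x0 e" for a b
  proof -
    have "norm (f a - f b) \<le> L * norm (a - b)"
    proof (rule differentiable_bound[of "cball x0 e" f "\<lambda>x h. \<Sum>i\<in>UNIV. h $ i * pd f x i"])
      show "convex (cball x0 e)" by simp
      fix x assume x: "x \<in> cball x0 e"
      show "(f has_derivative (\<lambda>h. \<Sum>i\<in>UNIV. h $ i * pd f x i)) (at x within cball x0 e)"
        using smooth_has_derivative[OF sm U, of x] x e(2) has_derivative_at_withinI by blast
      show "onorm (\<lambda>h. \<Sum>i\<in>UNIV. h $ i * pd f x i) \<le> L"
      proof (rule onorm_le)
        fix h :: "real^'n"
        have "norm (\<Sum>i\<in>UNIV. h $ i * pd f x i) \<le> (\<Sum>i\<in>UNIV. \<bar>h $ i\<bar> * \<bar>pd f x i\<bar>)"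
          by (metis (no_types, lifting) abs_mult real_norm_def sum.cong sum_abs)
        also have "\<dots> \<le> (\<Sum>i\<in>UNIV. norm h * B i)"
          by (intro sum_mono mult_mono) (auto simp: B[OF x] component_le_norm_cart)
        also have "\<dots> = L * norm h" unfolding L_def by (simp add: sum_distrib_left mult.commute)
        finally show "norm (\<Sum>i\<in>UNIV. h $ i * pd f x i) \<le> L * norm h" .
      qed
    qed (use a b in auto)
    then show ?thesis by (simp add: dist_norm)
  qed
  then show ?thesis using e by blast
qed

definition P1 :: "(real^'n \<Rightarrow> 'n \<Rightarrow> 'n \<Rightarrow> real) \<Rightarrow> (real^'n \<Rightarrow> 'n \<Rightarrow> real) \<Rightarrow> real^'n \<Rightarrow> real^'n \<Rightarrow> 'n \<Rightarrow> real" where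
  "P1 g a q w i = (\<Sum>j\<in>UNIV. g q i j * w $ j) + a q i"

lemma has_derivative_vnth[derivative_intros]:
  "(f has_derivative f') F \<Longrightarrow> ((\<lambda>x. f x $ i) has_derivative (\<lambda>h. f' h $ i)) F"
  by (rule bounded_linear.has_derivative[OF bounded_linear_vec_nth])

lemma axis_nth: "axis i (1::real) $ j = (if j = i then 1 else 0)"
  by (simp add: axis_def)

lemma ifm1: "x * (if P then 1 else 0) = (if P then x else (0::real))" by simp
lemma ifm2: "(if P then 1 else 0) * x = (if P then x else (0::real))" by simp

lemma ifm3: "x * (if P then y else 0) = (if P then x * y else (0::real))" by simp
lemma ifm4: "(if P then y else 0) * x = (if P then y * x else (0::real))" by simp
lemma sum_if_const: "(\<Sum>j\<in>A. if P then f j else 0) = (if P then (\<Sum>j\<in>A. f j) else (0::real))" by simp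

lemma pdp_lag1:
  fixes g :: "real^'n \<Rightarrow> 'n \<Rightarrow> 'n \<Rightarrow> real"
  assumes sym: "\<And>i j. g q i j = g q j i"
  shows "pdp (lag1 g a v) q p i = P1 g a q p i"
proof -
  have "((\<lambda>p'. lag1 g a v q p') has_derivative
     (\<lambda>h. 1/2 * (\<Sum>i\<in>UNIV. \<Sum>j\<in>UNIV. g q i j * (h $ i * p $ j + p $ i * h $ j)) + (\<Sum>i\<in>UNIV. a q i * h $ i))) (at p)"
    unfolding lag1_def
    by (auto intro!: derivative_eq_intros simp: algebra_simps)
  from pd_from_deriv[OF this, of i] show ?thesis
    unfolding pdp_def P1_def using sym
    by (simp add: axis_nth ifm1 ifm2 ifm3 ifm4 sum_if_const distrib_left distrib_right sum.distrib mult.assoc)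
qed

definition Q1 :: "(real^'n \<Rightarrow> 'n \<Rightarrow> 'n \<Rightarrow> real) \<Rightarrow> (real^'n \<Rightarrow> 'n \<Rightarrow> real) \<Rightarrow> (real^'n \<Rightarrow> real)
    \<Rightarrow> real^'n \<Rightarrow> real^'n \<Rightarrow> 'n \<Rightarrow> real" where
  "Q1 g a v q w i = 1/2 * (\<Sum>j\<in>UNIV. \<Sum>k\<in>UNIV. pd (\<lambda>x. g x j k) q i * w $ j * w $ k)
     + (\<Sum>j\<in>UNIV. pd (\<lambda>x. a x j) q i * w $ j) - pd v q i"

definition GW :: "(real^'n \<Rightarrow> 'n \<Rightarrow> 'n \<Rightarrow> real) \<Rightarrow> (real^'n \<Rightarrow> 'n \<Rightarrow> real) \<Rightarrow> real^'n \<Rightarrow> real^'n \<Rightarrow> real" where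
  "GW g a q w = (\<Sum>j\<in>UNIV. \<Sum>k\<in>UNIV. g q j k * w $ j * w $ k) + (\<Sum>j\<in>UNIV. a q j * w $ j)"

lemma pdq_lag1:
  fixes g :: "real^'n \<Rightarrow> 'n \<Rightarrow> 'n \<Rightarrow> real"
  assumes U: "open U" and q: "q \<in> U"
    and gs: "\<And>i j. smooth_on U (\<lambda>x. g x i j)" and as: "\<And>i. smooth_on U (\<lambda>x. a x i)"
    and vs: "smooth_on U v"
  shows "pdq (lag1 g a v) q p i = Q1 g a v q p i"
proof -
  note dg = smooth_has_derivative[OF gs U q] and da = smooth_has_derivative[OF as U q]
    and dv = smooth_has_derivative[OF vs U q]
  have "((\<lambda>q'. lag1 g a v q' p) has_derivative
     (\<lambda>h. 1/2 * (\<Sum>j\<in>UNIV. \<Sum>k\<in>UNIV. (\<Sum>m\<in>UNIV. h $ m * pd (\<lambda>x. g x j k) q m) * p $ j * p $ k)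
       + (\<Sum>j\<in>UNIV. (\<Sum>m\<in>UNIV. h $ m * pd (\<lambda>x. a x j) q m) * p $ j)
       - (\<Sum>m\<in>UNIV. h $ m * pd v q m))) (at q)"
    unfolding lag1_def
    by (auto intro!: derivative_eq_intros dg da dv)
  from pd_from_deriv[OF this, of i] show ?thesis
    unfolding pdq_def Q1_def by (simp add: sum_axis_mult)
qed

lemma pdp_star:
  fixes g :: "real^'n \<Rightarrow> 'n \<Rightarrow> 'n \<Rightarrow> real"
  assumes sym: "\<And>i j. g q i j = g q j i"
  shows "pdp (lag1_star N g a v) q p i = N q * P1 g a q (N q *\<^sub>R p) i"
proof -
  have "((\<lambda>p'. lag1_star N g a v q p') has_derivative
     (\<lambda>h. 1/2 * (\<Sum>i\<in>UNIV. \<Sum>j\<in>UNIV. (N q)^2 * g q i j * (h $ i * p $ j + p $ i * h $ j)) + (\<Sum>i\<in>UNIV. N q * a q i * h $ i))) (at p)"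
    unfolding lag1_star_def
    by (auto intro!: derivative_eq_intros simp: algebra_simps)
  from pd_from_deriv[OF this, of i] show ?thesis
    unfolding pdp_def P1_def using sym
    by (simp add: axis_nth ifm1 ifm2 ifm3 ifm4 sum_if_const distrib_left distrib_right sum.distrib
        sum_distrib_left power2_eq_square mult.assoc mult.left_commute)
qed

lemma pdq_star:
  fixes g :: "real^'n \<Rightarrow> 'n \<Rightarrow> 'n \<Rightarrow> real"
  assumes U: "open U" and q: "q \<in> U"
    and gs: "\<And>i j. smooth_on U (\<lambda>x. g x i j)" and as: "\<And>i. smooth_on U (\<lambda>x. a x i)"
    and vs: "smooth_on U v" and Ns: "smooth_on U N" and Nnz: "N q \<noteq> 0"
  shows "pdq (lag1_star N g a v) q p i = Q1 g a v q (N q *\<^sub>R p) i + pd N q i / N q * GW g a q (N q *\<^sub>R p)"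
proof -
  note dg = smooth_has_derivative[OF gs U q] and da = smooth_has_derivative[OF as U q]
    and dv = smooth_has_derivative[OF vs U q] and dN = smooth_has_derivative[OF Ns U q]
  have "((\<lambda>q'. lag1_star N g a v q' p) has_derivative
     (\<lambda>h. 1/2 * (\<Sum>j\<in>UNIV. \<Sum>k\<in>UNIV. (2 * N q * (\<Sum>m\<in>UNIV. h $ m * pd N q m) * g q j k
            + (N q)^2 * (\<Sum>m\<in>UNIV. h $ m * pd (\<lambda>x. g x j k) q m)) * p $ j * p $ k)
       + (\<Sum>j\<in>UNIV. ((\<Sum>m\<in>UNIV. h $ m * pd N q m) * a q j + N q * (\<Sum>m\<in>UNIV. h $ m * pd (\<lambda>x. a x j) q m)) * p $ j)
       - (\<Sum>m\<in>UNIV. h $ m * pd v q m))) (at q)"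
    unfolding lag1_star_def
    by (auto intro!: derivative_eq_intros dg da dv dN simp: power2_eq_square algebra_simps)
  from pd_from_deriv[OF this, of i]
  have e: "pdq (lag1_star N g a v) q p i = 1/2 * (\<Sum>j\<in>UNIV. \<Sum>k\<in>UNIV. (2 * N q * pd N q i * g q j k
            + (N q)^2 * pd (\<lambda>x. g x j k) q i) * p $ j * p $ k)
       + (\<Sum>j\<in>UNIV. (pd N q i * a q j + N q * pd (\<lambda>x. a x j) q i) * p $ j)
       - pd v q i"
    unfolding pdq_def by (simp only: sum_axis_mult)
  show ?thesis
    unfolding e Q1_def GW_def using Nnz
    by (simp add: field_simps sum_distrib_left sum_divide_distrib power2_eq_square sum.distrib)
qed

lemma chain_smooth:
  fixes f :: "real^'n \<Rightarrow> real"
  assumes "smooth_on U f" "open U" "x t \<in> U" "(x has_vector_derivative x') (at t)"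
  shows "((\<lambda>s. f (x s)) has_real_derivative (\<Sum>j\<in>UNIV. pd f (x t) j * x' $ j)) (at t)"
proof -
  have dx: "(x has_derivative (\<lambda>h. h *\<^sub>R x')) (at t)" using assms(4) by (simp add: has_vector_derivative_def)
  from has_derivative_compose[OF dx smooth_has_derivative[OF assms(1-3)]]
  have "((\<lambda>s. f (x s)) has_derivative (\<lambda>h. \<Sum>i\<in>UNIV. (h *\<^sub>R x') $ i * pd f (x t) i)) (at t)" .
  moreover have "(\<lambda>h. \<Sum>i\<in>UNIV. (h *\<^sub>R x') $ i * pd f (x t) i) = (*) (\<Sum>j\<in>UNIV. pd f (x t) j * x' $ j)"
    by (auto simp: fun_eq_iff sum_distrib_left mult_ac)
  ultimately show ?thesis by (simp add: has_field_derivative_def)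
qed

locale sys =
  fixes U :: "(real^'n) set"
    and g :: "real^'n \<Rightarrow> 'n \<Rightarrow> 'n \<Rightarrow> real"
    and a :: "real^'n \<Rightarrow> 'n \<Rightarrow> real"
    and v :: "real^'n \<Rightarrow> real"
    and C :: "real^'n \<Rightarrow> 'n \<Rightarrow> 'n \<Rightarrow> 'n \<Rightarrow> real"
    and N :: "real^'n \<Rightarrow> real"
  assumes U_open: "open U"
    and g_smooth: "\<And>i j. smooth_on U (\<lambda>x. g x i j)"
    and g_sym: "\<And>x i j. x \<in> U \<Longrightarrow> g x i j = g x j i"
    and g_pos: "\<And>x \<xi>. x \<in> U \<Longrightarrow> \<xi> \<noteq> 0 \<Longrightarrow> (\<Sum>i\<in>UNIV. \<Sum>j\<in>UNIV. g x i j * \<xi> $ i * \<xi> $ j) > 0"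
    and a_smooth: "\<And>i. smooth_on U (\<lambda>x. a x i)"
    and v_smooth: "smooth_on U v"
    and C_smooth: "\<And>k i j. smooth_on U (\<lambda>x. C x k i j)"
    and N_smooth: "smooth_on U N"
    and N_nonzero: "\<And>x. x \<in> U \<Longrightarrow> N x \<noteq> 0"
begin

lemma transfer:
  fixes I :: "real set" and x y :: "real \<Rightarrow> real^'n" and \<sigma> :: "real \<Rightarrow> real"
  assumes Io: "open I" and Ii: "is_interval I" and xI: "x ` I \<subseteq> U"
    and sig0: "\<forall>t\<in>I. (\<sigma> has_real_derivative N (x t)) (at t)"
    and yx0: "\<forall>t\<in>I. y (\<sigma> t) = x t"
    and xd0: "\<forall>t\<in>I. x differentiable at t"
    and t: "t \<in> I"
  shows "(y has_vector_derivative (1 / N (x t)) *\<^sub>R vector_derivative x (at t)) (at (\<sigma> t))"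
    and "((\<lambda>s. P1 g a (x s) (vector_derivative x (at s)) i) has_real_derivative X) (at t) \<Longrightarrow>
         ((\<lambda>s. pdp (lag1_star N g a v) (y s) (vector_derivative y (at s)) i) has_real_derivative
           (X + (\<Sum>j\<in>UNIV. pd N (x t) j * vector_derivative x (at t) $ j) * P1 g a (x t) (vector_derivative x (at t)) i / N (x t)))
          (at (\<sigma> t))"
    and "((\<lambda>s. pdp (lag1_star N g a v) (y s) (vector_derivative y (at s)) i) has_real_derivative Y) (at (\<sigma> t)) \<Longrightarrow>
         ((\<lambda>s. P1 g a (x s) (vector_derivative x (at s)) i) has_real_derivative
           (Y - (\<Sum>j\<in>UNIV. pd N (x t) j * vector_derivative x (at t) $ j) * P1 g a (x t) (vector_derivative x (at t)) i / N (x t)))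
          (at t)"
proof -
  have sig: "\<And>t. t \<in> I \<Longrightarrow> (\<sigma> has_real_derivative N (x t)) (at t)"
    and yx: "\<And>t. t \<in> I \<Longrightarrow> y (\<sigma> t) = x t"
    and xd: "\<And>t. t \<in> I \<Longrightarrow> x differentiable at t" using sig0 yx0 xd0 by auto
  define \<tau> where "\<tau> = inv_into I \<sigma>"
  define x' where "x' s = vector_derivative x (at s)" for s
  have Nnz: "N (x s) \<noteq> 0" if "s \<in> I" for s using N_nonzero xI that by auto
  have inj: "inj_on \<sigma> I"
    by (rule time_change(1)[of I \<sigma> "\<lambda>s. N (x s)"]) (use Io Ii sig Nnz in auto)
  have sIo: "open (\<sigma> ` I)"
    by (rule time_change(2)[of I \<sigma> "\<lambda>s. N (x s)"]) (use Io Ii sig Nnz in auto)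
  have \<tau>d: "(\<tau> has_real_derivative (1 / N (x s))) (at (\<sigma> s))" if "s \<in> I" for s
    unfolding \<tau>_def by (rule time_change(3)[of I \<sigma> "\<lambda>s. N (x s)"]) (use Io Ii sig Nnz that in auto)
  have \<tau>\<sigma>: "\<tau> (\<sigma> s) = s" if "s \<in> I" for s unfolding \<tau>_def using inj that by simp
  have \<tau>I: "\<tau> r \<in> I" "\<sigma> (\<tau> r) = r" if "r \<in> \<sigma> ` I" for r
    unfolding \<tau>_def using that inj by (auto simp: f_inv_into_f inv_into_into)
  have yxt: "y r = x (\<tau> r)" if "r \<in> \<sigma> ` I" for r using \<tau>I[OF that] yx by metis
  have xv: "(x has_vector_derivative x' s) (at s)" if "s \<in> I" for s
    unfolding x'_def using xd[OF that] vector_derivative_works by blast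
  have yv: "(y has_vector_derivative (1 / N (x s)) *\<^sub>R x' s) (at (\<sigma> s))" if s: "s \<in> I" for s
  proof -
    have "(\<tau> has_vector_derivative (1 / N (x s))) (at (\<sigma> s))"
      using \<tau>d[OF s] by (simp add: has_real_derivative_iff_has_vector_derivative)
    from vector_diff_chain_at[OF this] xv[OF s] \<tau>\<sigma>[OF s]
    have "((x \<circ> \<tau>) has_vector_derivative (1 / N (x s)) *\<^sub>R x' s) (at (\<sigma> s))" by simp
    then show ?thesis
      by (rule has_vector_derivative_transform_within_open[OF _ sIo]) (use s yxt in auto)
  qed
  then show "(y has_vector_derivative (1 / N (x t)) *\<^sub>R vector_derivative x (at t)) (at (\<sigma> t))"
    using t unfolding x'_def by blast
  have y'eq: "vector_derivative y (at (\<sigma> s)) = (1 / N (x s)) *\<^sub>R x' s" if "s \<in> I" for s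
    using yv[OF that] by (rule vector_derivative_at)
  define P where "P s = P1 g a (x s) (x' s) i" for s
  define H where "H s = N (x s) * P s" for s
  define Pst where "Pst r = pdp (lag1_star N g a v) (y r) (vector_derivative y (at r)) i" for r
  have PstH: "Pst (\<sigma> s) = H s" if s: "s \<in> I" for s
  proof -
    have "Pst (\<sigma> s) = N (x s) * P1 g a (x s) (N (x s) *\<^sub>R ((1 / N (x s)) *\<^sub>R x' s)) i"
      unfolding Pst_def yx[OF s] y'eq[OF s] using xI s g_sym
      by (intro pdp_star) auto
    also have "\<dots> = H s" unfolding H_def P_def using Nnz[OF s] by simp
    finally show ?thesis .
  qed
  have PstH2: "Pst r = H (\<tau> r)" if "r \<in> \<sigma> ` I" for r using PstH \<tau>I[OF that] by metis
  define Nd where "Nd = (\<Sum>j\<in>UNIV. pd N (x t) j * x' t $ j)"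
  have Nxd: "((\<lambda>s. N (x s)) has_real_derivative Nd) (at t)"
    unfolding Nd_def by (rule chain_smooth[OF N_smooth U_open _ xv[OF t]]) (use xI t in auto)
  show "((\<lambda>s. P1 g a (x s) (vector_derivative x (at s)) i) has_real_derivative X) (at t) \<Longrightarrow>
         ((\<lambda>s. pdp (lag1_star N g a v) (y s) (vector_derivative y (at s)) i) has_real_derivative
           (X + (\<Sum>j\<in>UNIV. pd N (x t) j * vector_derivative x (at t) $ j) * P1 g a (x t) (vector_derivative x (at t)) i / N (x t)))
          (at (\<sigma> t))"
  proof -
    assume "((\<lambda>s. P1 g a (x s) (vector_derivative x (at s)) i) has_real_derivative X) (at t)"
    then have Pd: "(P has_real_derivative X) (at t)" unfolding P_def x'_def .
    have Hd: "(H has_real_derivative (N (x t) * X + Nd * P t)) (at t)"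
      unfolding H_def[abs_def] using DERIV_mult[OF Nxd Pd] by (simp add: algebra_simps)
    have "((H \<circ> \<tau>) has_real_derivative (N (x t) * X + Nd * P t) * (1 / N (x t))) (at (\<sigma> t))"
      by (rule DERIV_chain) (use Hd \<tau>\<sigma>[OF t] \<tau>d[OF t] in auto)
    then have "(Pst has_real_derivative (N (x t) * X + Nd * P t) * (1 / N (x t))) (at (\<sigma> t))"
      by (rule has_field_derivative_transform_within_open[OF _ sIo]) (use t PstH2 in auto)
    moreover have "(N (x t) * X + Nd * P t) * (1 / N (x t)) = X + Nd * P t / N (x t)"
      using Nnz[OF t] by (simp add: field_simps)
    ultimately show ?thesis unfolding Pst_def Nd_def P_def x'_def by simp
  qed
  show "((\<lambda>s. pdp (lag1_star N g a v) (y s) (vector_derivative y (at s)) i) has_real_derivative Y) (at (\<sigma> t)) \<Longrightarrow>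
         ((\<lambda>s. P1 g a (x s) (vector_derivative x (at s)) i) has_real_derivative
           (Y - (\<Sum>j\<in>UNIV. pd N (x t) j * vector_derivative x (at t) $ j) * P1 g a (x t) (vector_derivative x (at t)) i / N (x t)))
          (at t)"
  proof -
    assume "((\<lambda>s. pdp (lag1_star N g a v) (y s) (vector_derivative y (at s)) i) has_real_derivative Y) (at (\<sigma> t))"
    then have Pstd: "(Pst has_real_derivative Y) (at (\<sigma> t))" unfolding Pst_def .
    have "((Pst \<circ> \<sigma>) has_real_derivative Y * N (x t)) (at t)"
      by (rule DERIV_chain[OF Pstd sig[OF t]])
    then have Hd: "(H has_real_derivative Y * N (x t)) (at t)"
      by (rule has_field_derivative_transform_within_open[OF _ Io t]) (use PstH in auto)
    have "((\<lambda>s. H s / N (x s)) has_real_derivative (Y * N (x t) * N (x t) - H t * Nd) / (N (x t) * N (x t))) (at t)"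
      by (rule DERIV_divide[OF Hd Nxd Nnz[OF t]])
    then have "(P has_real_derivative (Y * N (x t) * N (x t) - H t * Nd) / (N (x t) * N (x t))) (at t)"
      by (rule has_field_derivative_transform_within_open[OF _ Io t]) (use Nnz in \<open>auto simp: H_def\<close>)
    moreover have "(Y * N (x t) * N (x t) - H t * Nd) / (N (x t) * N (x t)) = Y - Nd * P t / N (x t)"
      using Nnz[OF t] by (simp add: H_def field_simps)
    ultimately show ?thesis unfolding Nd_def P_def x'_def by simp
  qed
qed

end

context sys begin

definition Res :: "real^'n \<Rightarrow> real^'n \<Rightarrow> 'n \<Rightarrow> real" where
  "Res q w i = gyro_force C g q w i + (\<Sum>j\<in>UNIV. pd N q j * w $ j) * P1 g a q w i / N q
      - pd N q i / N q * GW g a q w"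

lemma pdq_star_at:
  assumes q: "q \<in> U"
  shows "pdq (lag1_star N g a v) q ((1 / N q) *\<^sub>R w) i = Q1 g a v q w i + pd N q i / N q * GW g a q w"
  using pdq_star[OF U_open q g_smooth a_smooth v_smooth N_smooth N_nonzero[OF q], where p="(1 / N q) *\<^sub>R w" and i=i]
    N_nonzero[OF q] by simp

lemma P1_transform:
  assumes Io: "open I" and xI: "x ` I \<subseteq> U" and t: "t \<in> I"
  shows "((\<lambda>s. pdp (lag1 g a v) (x s) (vector_derivative x (at s)) i) has_real_derivative X) (at t)
     \<longleftrightarrow> ((\<lambda>s. P1 g a (x s) (vector_derivative x (at s)) i) has_real_derivative X) (at t)"
proof -
  have eq: "pdp (lag1 g a v) (x s) (vector_derivative x (at s)) i = P1 g a (x s) (vector_derivative x (at s)) i"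
    if "s \<in> I" for s using xI that g_sym by (intro pdp_lag1) auto
  show ?thesis
  proof
    assume "((\<lambda>s. pdp (lag1 g a v) (x s) (vector_derivative x (at s)) i) has_real_derivative X) (at t)"
    then show "((\<lambda>s. P1 g a (x s) (vector_derivative x (at s)) i) has_real_derivative X) (at t)"
      by (rule has_field_derivative_transform_within_open[OF _ Io t]) (use eq in auto)
  next
    assume "((\<lambda>s. P1 g a (x s) (vector_derivative x (at s)) i) has_real_derivative X) (at t)"
    then show "((\<lambda>s. pdp (lag1 g a v) (x s) (vector_derivative x (at s)) i) has_real_derivative X) (at t)"
      by (rule has_field_derivative_transform_within_open[OF _ Io t]) (use eq in auto)
  qed
qed

lemma becomes_if:
  assumes R: "\<And>q w i. q \<in> U \<Longrightarrow> Res q w i = 0"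
  shows "becomes U N (lag1 g a v) (gyro_force C g) (lag1_star N g a v)"
  unfolding becomes_def
proof (intro allI impI)
  fix I :: "real set" and x :: "real \<Rightarrow> real^'n" and \<sigma> :: "real \<Rightarrow> real" and y :: "real \<Rightarrow> real^'n"
  assume "is_interval I \<and> open I \<and> x ` I \<subseteq> U \<and> (\<forall>t\<in>I. (\<sigma> has_real_derivative N (x t)) (at t)) \<and>
       (\<forall>t\<in>I. y (\<sigma> t) = x t)"
  then have Ii: "is_interval I" and Io: "open I" and xI: "x ` I \<subseteq> U"
    and sig: "\<And>t. t \<in> I \<Longrightarrow> (\<sigma> has_real_derivative N (x t)) (at t)"
    and yx: "\<And>t. t \<in> I \<Longrightarrow> y (\<sigma> t) = x t"
    and sig0: "\<forall>t\<in>I. (\<sigma> has_real_derivative N (x t)) (at t)"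
    and yx0: "\<forall>t\<in>I. y (\<sigma> t) = x t" by auto
  have xtU: "x t \<in> U" if "t \<in> I" for t using xI that by auto
  show "EL_solution (lag1 g a v) (gyro_force C g) I x = EL_solution (lag1_star N g a v) (\<lambda>_ _ _. 0) (\<sigma> ` I) y"
  proof
    assume EL: "EL_solution (lag1 g a v) (gyro_force C g) I x"
    then have xd: "\<forall>t\<in>I. x differentiable at t" unfolding EL_solution_def by auto
    note tr = transfer[OF Io Ii xI sig0 yx0 xd]
    show "EL_solution (lag1_star N g a v) (\<lambda>_ _ _. 0) (\<sigma> ` I) y"
      unfolding EL_solution_def
    proof (intro conjI ballI allI)
      fix r assume "r \<in> \<sigma> ` I"
      then obtain t where t: "t \<in> I" and r: "r = \<sigma> t" by auto
      show "y differentiable at r" using tr(1)[OF t] r by (auto intro: differentiableI_vector)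
    next
      fix r i assume "r \<in> \<sigma> ` I"
      then obtain t where t: "t \<in> I" and r: "r = \<sigma> t" by auto
      have y'eq: "vector_derivative y (at r) = (1 / N (x t)) *\<^sub>R vector_derivative x (at t)"
        using tr(1)[OF t] r by (simp add: vector_derivative_at)
      have "((\<lambda>s. pdp (lag1 g a v) (x s) (vector_derivative x (at s)) i) has_real_derivative
          pdq (lag1 g a v) (x t) (vector_derivative x (at t)) i + gyro_force C g (x t) (vector_derivative x (at t)) i) (at t)"
        using EL t unfolding EL_solution_def by auto
      then have "((\<lambda>s. P1 g a (x s) (vector_derivative x (at s)) i) has_real_derivative
          Q1 g a v (x t) (vector_derivative x (at t)) i + gyro_force C g (x t) (vector_derivative x (at t)) i) (at t)"
        using P1_transform[OF Io xI t] pdq_lag1[OF U_open xtU[OF t] g_smooth a_smooth v_smooth] by simp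
      from tr(2)[OF t this]
      have "((\<lambda>s. pdp (lag1_star N g a v) (y s) (vector_derivative y (at s)) i) has_real_derivative
          Q1 g a v (x t) (vector_derivative x (at t)) i + pd N (x t) i / N (x t) * GW g a (x t) (vector_derivative x (at t))) (at r)"
      proof (subst (asm) r[symmetric], elim back_subst[where P="\<lambda>d. (_ has_real_derivative d) _"])
        show "Q1 g a v (x t) (vector_derivative x (at t)) i + gyro_force C g (x t) (vector_derivative x (at t)) i +
          (\<Sum>j\<in>UNIV. pd N (x t) j * vector_derivative x (at t) $ j) * P1 g a (x t) (vector_derivative x (at t)) i / N (x t)
          = Q1 g a v (x t) (vector_derivative x (at t)) i + pd N (x t) i / N (x t) * GW g a (x t) (vector_derivative x (at t))"
          using R[OF xtU[OF t], of "vector_derivative x (at t)" i] unfolding Res_def by linarith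
      qed
      then show "((\<lambda>s. pdp (lag1_star N g a v) (y s) (vector_derivative y (at s)) i) has_real_derivative
          pdq (lag1_star N g a v) (y r) (vector_derivative y (at r)) i + 0) (at r)"
        using pdq_star_at[OF xtU[OF t]] y'eq yx[OF t] r by simp
    qed
  next
    assume EL: "EL_solution (lag1_star N g a v) (\<lambda>_ _ _. 0) (\<sigma> ` I) y"
    have xd: "x differentiable at t" if t: "t \<in> I" for t
    proof -
      have "y differentiable at (\<sigma> t)" using EL t unfolding EL_solution_def by auto
      then have yv: "(y has_vector_derivative vector_derivative y (at (\<sigma> t))) (at (\<sigma> t))"
        using vector_derivative_works by blast
      have "(\<sigma> has_vector_derivative N (x t)) (at t)"
        using sig[OF t] by (simp add: has_real_derivative_iff_has_vector_derivative)
      from vector_diff_chain_at[OF this yv]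
      have "((y \<circ> \<sigma>) has_vector_derivative N (x t) *\<^sub>R vector_derivative y (at (\<sigma> t))) (at t)" .
      then have "(x has_vector_derivative N (x t) *\<^sub>R vector_derivative y (at (\<sigma> t))) (at t)"
        by (rule has_vector_derivative_transform_within_open[OF _ Io t]) (use yx in auto)
      then show ?thesis by (auto intro: differentiableI_vector)
    qed
    have xd0: "\<forall>t\<in>I. x differentiable at t" using xd by auto
    note tr = transfer[OF Io Ii xI sig0 yx0 xd0]
    show "EL_solution (lag1 g a v) (gyro_force C g) I x"
      unfolding EL_solution_def
    proof (intro conjI ballI allI)
      fix t assume "t \<in> I" then show "x differentiable at t" by (rule xd)
    next
      fix t i assume t: "t \<in> I"
      have y'eq: "vector_derivative y (at (\<sigma> t)) = (1 / N (x t)) *\<^sub>R vector_derivative x (at t)"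
        using tr(1)[OF t] by (simp add: vector_derivative_at)
      have "((\<lambda>s. pdp (lag1_star N g a v) (y s) (vector_derivative y (at s)) i) has_real_derivative
          pdq (lag1_star N g a v) (y (\<sigma> t)) (vector_derivative y (at (\<sigma> t))) i + 0) (at (\<sigma> t))"
        using EL t unfolding EL_solution_def by auto
      then have "((\<lambda>s. pdp (lag1_star N g a v) (y s) (vector_derivative y (at s)) i) has_real_derivative
          Q1 g a v (x t) (vector_derivative x (at t)) i + pd N (x t) i / N (x t) * GW g a (x t) (vector_derivative x (at t))) (at (\<sigma> t))"
        using pdq_star_at[OF xtU[OF t]] y'eq yx[OF t] by simp
      from tr(3)[OF t this]
      have "((\<lambda>s. P1 g a (x s) (vector_derivative x (at s)) i) has_real_derivative
          Q1 g a v (x t) (vector_derivative x (at t)) i + gyro_force C g (x t) (vector_derivative x (at t)) i) (at t)"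
      proof (elim back_subst[where P="\<lambda>d. (_ has_real_derivative d) _"])
        show "Q1 g a v (x t) (vector_derivative x (at t)) i + pd N (x t) i / N (x t) * GW g a (x t) (vector_derivative x (at t)) -
          (\<Sum>j\<in>UNIV. pd N (x t) j * vector_derivative x (at t) $ j) * P1 g a (x t) (vector_derivative x (at t)) i / N (x t)
          = Q1 g a v (x t) (vector_derivative x (at t)) i + gyro_force C g (x t) (vector_derivative x (at t)) i"
          using R[OF xtU[OF t], of "vector_derivative x (at t)" i] unfolding Res_def by linarith
      qed
      then show "((\<lambda>s. pdp (lag1 g a v) (x s) (vector_derivative x (at s)) i) has_real_derivative
          pdq (lag1 g a v) (x t) (vector_derivative x (at t)) i + gyro_force C g (x t) (vector_derivative x (at t)) i) (at t)"
        using P1_transform[OF Io xI t] pdq_lag1[OF U_open xtU[OF t] g_smooth a_smooth v_smooth] by simp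
    qed
  qed
qed

end

definition LLat :: "'z::metric_space \<Rightarrow> ('z \<Rightarrow> real) \<Rightarrow> bool" where
  "LLat z0 \<phi> \<longleftrightarrow> (\<exists>e>0. \<exists>L. \<forall>a\<in>cball z0 e. \<forall>b\<in>cball z0 e. \<bar>\<phi> a - \<phi> b\<bar> \<le> L * dist a b)"

lemma LLatI: "e > 0 \<Longrightarrow> (\<And>a b. a \<in> cball z0 e \<Longrightarrow> b \<in> cball z0 e \<Longrightarrow> \<bar>\<phi> a - \<phi> b\<bar> \<le> L * dist a b) \<Longrightarrow> LLat z0 \<phi>"
  unfolding LLat_def by blast

lemma LLatE:
  assumes "LLat z0 \<phi>"
  obtains e L where "e > 0" "L \<ge> 0" "\<And>a b. a \<in> cball z0 e \<Longrightarrow> b \<in> cball z0 e \<Longrightarrow> \<bar>\<phi> a - \<phi> b\<bar> \<le> L * dist a b"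
proof -
  obtain e L where e: "e > 0" and L: "\<And>a b. a \<in> cball z0 e \<Longrightarrow> b \<in> cball z0 e \<Longrightarrow> \<bar>\<phi> a - \<phi> b\<bar> \<le> L * dist a b"
    using assms unfolding LLat_def by blast
  have "\<bar>\<phi> a - \<phi> b\<bar> \<le> max L 0 * dist a b" if "a \<in> cball z0 e" "b \<in> cball z0 e" for a b
  proof -
    have "L * dist a b \<le> max L 0 * dist a b" by (rule mult_right_mono) auto
    then show ?thesis using L[OF that] by linarith
  qed
  moreover have "max L 0 \<ge> 0" by simp
  ultimately show ?thesis using that e by blast
qed

lemma LLat_shrink:
  assumes "\<And>a b. a \<in> cball z0 e \<Longrightarrow> b \<in> cball z0 e \<Longrightarrow> P a b" "e' \<le> e"
  shows "\<And>a b. a \<in> cball z0 e' \<Longrightarrow> b \<in> cball z0 e' \<Longrightarrow> P a b"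
  using assms by auto

lemma LLat_const[intro]: "LLat z0 (\<lambda>z. c)"
  by (rule LLatI[of 1 _ _ 0]) auto

lemma LLat_add[intro]:
  assumes "LLat z0 \<phi>" "LLat z0 \<psi>"
  shows "LLat z0 (\<lambda>z. \<phi> z + \<psi> z)"
proof -
  obtain e1 L1 where e1: "e1 > 0" and L1: "\<And>a b. a \<in> cball z0 e1 \<Longrightarrow> b \<in> cball z0 e1 \<Longrightarrow> \<bar>\<phi> a - \<phi> b\<bar> \<le> L1 * dist a b"
    using LLatE[OF assms(1)] by metis
  obtain e2 L2 where e2: "e2 > 0" and L2: "\<And>a b. a \<in> cball z0 e2 \<Longrightarrow> b \<in> cball z0 e2 \<Longrightarrow> \<bar>\<psi> a - \<psi> b\<bar> \<le> L2 * dist a b"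
    using LLatE[OF assms(2)] by metis
  have m: "min e1 e2 > 0" using e1 e2 by auto
  show ?thesis
  proof (rule LLatI[OF m, of _ _ "L1 + L2"])
    fix a b assume a: "a \<in> cball z0 (min e1 e2)" and b: "b \<in> cball z0 (min e1 e2)"
    have "\<bar>\<phi> a - \<phi> b\<bar> \<le> L1 * dist a b" using a b by (intro L1) auto
    moreover have "\<bar>\<psi> a - \<psi> b\<bar> \<le> L2 * dist a b" using a b by (intro L2) auto
    ultimately show "\<bar>\<phi> a + \<psi> a - (\<phi> b + \<psi> b)\<bar> \<le> (L1 + L2) * dist a b"
      by (simp add: algebra_simps)
  qed
qed

lemma LLat_neg[intro]:
  assumes "LLat z0 \<phi>"
  shows "LLat z0 (\<lambda>z. - \<phi> z)"
  using assms unfolding LLat_def by (simp add: abs_minus_commute)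

lemma LLat_diff[intro]:
  assumes "LLat z0 \<phi>" "LLat z0 \<psi>"
  shows "LLat z0 (\<lambda>z. \<phi> z - \<psi> z)"
  using LLat_add[OF assms(1) LLat_neg[OF assms(2)]] by simp

lemma LLat_mult[intro]:
  assumes "LLat z0 \<phi>" "LLat z0 \<psi>"
  shows "LLat z0 (\<lambda>z. \<phi> z * \<psi> z)"
proof -
  obtain e1 L1 where e1: "e1 > 0" "L1 \<ge> 0" and L1: "\<And>a b. a \<in> cball z0 e1 \<Longrightarrow> b \<in> cball z0 e1 \<Longrightarrow> \<bar>\<phi> a - \<phi> b\<bar> \<le> L1 * dist a b"
    using LLatE[OF assms(1)] by metis
  obtain e2 L2 where e2: "e2 > 0" "L2 \<ge> 0" and L2: "\<And>a b. a \<in> cball z0 e2 \<Longrightarrow> b \<in> cball z0 e2 \<Longrightarrow> \<bar>\<psi> a - \<psi> b\<bar> \<le> L2 * dist a b"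
    using LLatE[OF assms(2)] by metis
  define e where "e = min e1 e2"
  have e: "e > 0" "e \<le> e1" "e \<le> e2" unfolding e_def using e1 e2 by auto
  define B1 where "B1 = \<bar>\<phi> z0\<bar> + L1 * e"
  define B2 where "B2 = \<bar>\<psi> z0\<bar> + L2 * e"
  have b1: "\<bar>\<phi> a\<bar> \<le> B1" if "a \<in> cball z0 e" for a
  proof -
    have "\<bar>\<phi> a - \<phi> z0\<bar> \<le> L1 * dist a z0" using that e by (intro L1) auto
    also have "\<dots> \<le> L1 * e" using that e1 by (intro mult_left_mono) (auto simp: dist_commute)
    finally show ?thesis unfolding B1_def by linarith
  qed
  have b2: "\<bar>\<psi> a\<bar> \<le> B2" if "a \<in> cball z0 e" for a
  proof -
    have "\<bar>\<psi> a - \<psi> z0\<bar> \<le> L2 * dist a z0" using that e by (intro L2) auto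
    also have "\<dots> \<le> L2 * e" using that e2 by (intro mult_left_mono) (auto simp: dist_commute)
    finally show ?thesis unfolding B2_def by linarith
  qed
  show ?thesis
  proof (rule LLatI[of e _ _ "B1 * L2 + B2 * L1"])
    fix a b assume a: "a \<in> cball z0 e" and b: "b \<in> cball z0 e"
    have "\<phi> a * \<psi> a - \<phi> b * \<psi> b = \<phi> a * (\<psi> a - \<psi> b) + \<psi> b * (\<phi> a - \<phi> b)" by (simp add: algebra_simps)
    then have "\<bar>\<phi> a * \<psi> a - \<phi> b * \<psi> b\<bar> \<le> \<bar>\<phi> a\<bar> * \<bar>\<psi> a - \<psi> b\<bar> + \<bar>\<psi> b\<bar> * \<bar>\<phi> a - \<phi> b\<bar>"
      by (metis abs_mult abs_triangle_ineq)
    also have "\<dots> \<le> B1 * (L2 * dist a b) + B2 * (L1 * dist a b)"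
      using a b e b1[OF a] b2[OF b] L1[of a b] L2[of a b]
      by (intro add_mono mult_mono) auto
    finally show "\<bar>\<phi> a * \<psi> a - \<phi> b * \<psi> b\<bar> \<le> (B1 * L2 + B2 * L1) * dist a b"
      by (simp add: algebra_simps)
  qed (use e in auto)
qed

lemma LLat_sum[intro]:
  assumes "\<And>i. i \<in> S \<Longrightarrow> LLat z0 (\<phi> i)"
  shows "LLat z0 (\<lambda>z. \<Sum>i\<in>S. \<phi> i z)"
proof (cases "finite S")
  case True
  then show ?thesis using assms
  proof (induction S rule: finite_induct)
    case empty then show ?case by (simp add: LLat_const)
  next
    case (insert x F)
    then show ?case using LLat_add[of z0 "\<phi> x" "\<lambda>z. \<Sum>i\<in>F. \<phi> i z"] by simp
  qed
next
  case False then show ?thesis by (simp add: LLat_const)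
qed

lemma LLat_all:
  assumes "finite S" "\<And>i. i \<in> S \<Longrightarrow> LLat z0 (\<phi> i)"
  shows "\<exists>e>0. \<exists>L\<ge>0. \<forall>i\<in>S. \<forall>a\<in>cball z0 e. \<forall>b\<in>cball z0 e. \<bar>\<phi> i a - \<phi> i b\<bar> \<le> L * dist a b"
  using assms
proof (induction S rule: finite_induct)
  case empty show ?case by (rule exI[of _ 1], simp, rule exI[of _ 0], simp)
next
  case (insert x F)
  then obtain e L where e: "e > 0" "L \<ge> 0" and L: "\<forall>i\<in>F. \<forall>a\<in>cball z0 e. \<forall>b\<in>cball z0 e. \<bar>\<phi> i a - \<phi> i b\<bar> \<le> L * dist a b"
    by auto
  obtain e1 L1 where e1: "e1 > 0" "L1 \<ge> 0" and L1: "\<And>a b. a \<in> cball z0 e1 \<Longrightarrow> b \<in> cball z0 e1 \<Longrightarrow> \<bar>\<phi> x a - \<phi> x b\<bar> \<le> L1 * dist a b"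
    using LLatE[OF insert.prems[of x]] by auto
  have main: "\<bar>\<phi> i a - \<phi> i b\<bar> \<le> max L L1 * dist a b"
    if i: "i \<in> insert x F" and a: "a \<in> cball z0 (min e e1)" and b: "b \<in> cball z0 (min e e1)" for i a b
    proof (cases "i = x")
      case True
      then have "\<bar>\<phi> i a - \<phi> i b\<bar> \<le> L1 * dist a b" using L1[of a b] a b True by auto
      moreover have "L1 * dist a b \<le> max L L1 * dist a b" by (rule mult_right_mono) auto
      ultimately show ?thesis by linarith
    next
      case False
      then have "\<bar>\<phi> i a - \<phi> i b\<bar> \<le> L * dist a b" using a b i L by auto
      moreover have "L * dist a b \<le> max L L1 * dist a b" by (rule mult_right_mono) auto
      ultimately show ?thesis by linarith
    qed
  have "min e e1 > 0" "max L L1 \<ge> 0" using e e1 by auto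
  then show ?case using main by blast
qed

lemma LLat_fst_smooth[intro]:
  fixes f :: "real^'n \<Rightarrow> real" and z0 :: "(real^'n) \<times> 'b::real_normed_vector"
  assumes "smooth_on U f" "open U" "fst z0 \<in> U"
  shows "LLat z0 (\<lambda>z. f (fst z))"
proof -
  obtain e L where e: "e > 0" "cball (fst z0) e \<subseteq> U"
    and L: "\<forall>a\<in>cball (fst z0) e. \<forall>b\<in>cball (fst z0) e. \<bar>f a - f b\<bar> \<le> L * dist a b"
    using smooth_lip[OF assms] by blast
  obtain L' where L': "\<forall>a\<in>cball (fst z0) e. \<forall>b\<in>cball (fst z0) e. \<bar>f a - f b\<bar> \<le> L' * dist a b" "L' \<ge> 0"
  proof
    show "\<forall>a\<in>cball (fst z0) e. \<forall>b\<in>cball (fst z0) e. \<bar>f a - f b\<bar> \<le> max L 0 * dist a b"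
    proof (intro ballI)
      fix a b assume "a \<in> cball (fst z0) e" "b \<in> cball (fst z0) e"
      moreover have "L * dist a b \<le> max L 0 * dist a b" by (rule mult_right_mono) auto
      ultimately show "\<bar>f a - f b\<bar> \<le> max L 0 * dist a b" using L by fastforce
    qed
  qed simp
  show ?thesis
  proof (rule LLatI[OF e(1)])
    fix a b assume a: "a \<in> cball z0 e" and b: "b \<in> cball z0 e"
    have da: "dist (fst z0) (fst a) \<le> e" using a dist_fst_le[of z0 a] by auto
    have db: "dist (fst z0) (fst b) \<le> e" using b dist_fst_le[of z0 b] by auto
    have "\<bar>f (fst a) - f (fst b)\<bar> \<le> L' * dist (fst a) (fst b)" using L' da db by auto
    also have "\<dots> \<le> L' * dist a b" using L'(2) dist_fst_le[of a b] by (intro mult_left_mono) auto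
    finally show "\<bar>f (fst a) - f (fst b)\<bar> \<le> L' * dist a b" .
  qed
qed

lemma LLat_snd[intro]:
  fixes z0 :: "'a::metric_space \<times> (real^'n)"
  shows "LLat z0 (\<lambda>z. snd z $ j)"
proof (rule LLatI[of 1 _ _ 1])
  fix a b :: "'a \<times> (real^'n)"
  have "\<bar>snd a $ j - snd b $ j\<bar> \<le> dist (snd a) (snd b)"
    by (metis dist_real_def dist_vec_nth_le)
  also have "\<dots> \<le> dist a b" by (rule dist_snd_le)
  finally show "\<bar>snd a $ j - snd b $ j\<bar> \<le> 1 * dist a b" by simp
qed simp

definition Gv :: "(real^'n \<Rightarrow> 'n \<Rightarrow> 'n \<Rightarrow> real) \<Rightarrow> real^'n \<Rightarrow> real^'n \<Rightarrow> real^'n" where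
  "Gv g q \<xi> = (\<chi> i. \<Sum>j\<in>UNIV. g q i j * \<xi> $ j)"

lemma Gv_inner: "\<xi> \<bullet> Gv g q \<xi> = (\<Sum>i\<in>UNIV. \<Sum>j\<in>UNIV. g q i j * \<xi> $ i * \<xi> $ j)"
  unfolding Gv_def inner_vec_def by (simp add: sum_distrib_left mult_ac)

lemma Gv_diff: "Gv g q (\<xi> - \<eta>) = Gv g q \<xi> - Gv g q \<eta>"
  unfolding Gv_def by (simp add: vec_eq_iff algebra_simps sum_subtractf)

lemma Gv_linear: "linear (Gv g q)"
  unfolding Gv_def
  by (rule linearI) (simp_all add: vec_eq_iff algebra_simps sum.distrib sum_distrib_left)

lemma quad_scale: "(\<Sum>i\<in>UNIV. \<Sum>j\<in>UNIV. G i j * (s *\<^sub>R \<xi>) $ i * (s *\<^sub>R \<xi>) $ j)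
   = s^2 * (\<Sum>i\<in>UNIV. \<Sum>j\<in>UNIV. G i j * \<xi> $ i * \<xi> $ j)"
  by (simp add: sum_distrib_left power2_eq_square mult_ac)

context sys begin

lemma Gv_surj:
  assumes q: "q \<in> U"
  shows "\<exists>\<xi>. Gv g q \<xi> = b"
proof -
  have "inj (Gv g q)"
  proof (rule linear_inj_on_iff_eq_0[THEN iffD2, OF Gv_linear, of UNIV, simplified], intro allI impI)
    fix \<xi> :: "real^'n" assume "Gv g q \<xi> = 0"
    then have "(\<Sum>i\<in>UNIV. \<Sum>j\<in>UNIV. g q i j * \<xi> $ i * \<xi> $ j) = 0"
      using Gv_inner[of \<xi> g q] by simp
    then show "\<xi> = 0" using g_pos[OF q, of \<xi>] by (cases "\<xi> = 0") auto
  qed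
  then have "surj (Gv g q)" using linear_injective_imp_surjective Gv_linear by blast
  then show ?thesis by (metis surjD)
qed

lemma coercive:
  assumes q0: "q0 \<in> U"
  shows "\<exists>e>0. cball q0 e \<subseteq> U \<and> (\<exists>c>0. \<forall>q\<in>cball q0 e. \<forall>\<xi>. c * (norm \<xi>)^2 \<le> (\<Sum>i\<in>UNIV. \<Sum>j\<in>UNIV. g q i j * \<xi> $ i * \<xi> $ j))"
proof -
  obtain e where e: "e > 0" "cball q0 e \<subseteq> U" using U_open q0 open_contains_cball by blast
  define K where "K = cball q0 e \<times> sphere (0::real^'n) 1"
  define f where "f z = (\<Sum>i\<in>UNIV. \<Sum>j\<in>UNIV. g (fst z) i j * snd z $ i * snd z $ j)" for z :: "(real^'n) \<times> (real^'n)"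
  have Kc: "compact K" unfolding K_def by (intro compact_Times) auto
  obtain i0 :: 'n where True by blast
  have "(q0, axis i0 1) \<in> K" unfolding K_def using e by (auto simp: norm_axis_1)
  then have Kne: "K \<noteq> {}" by auto
  have gc: "continuous_on K (\<lambda>z. g (fst z) i j)" for i j
  proof (rule continuous_on_compose2[OF smooth_cont[OF g_smooth U_open, of i j]])
    show "continuous_on K fst" by (intro continuous_intros)
    show "fst ` K \<subseteq> U" unfolding K_def using e by auto
  qed
  have fc: "continuous_on K f" unfolding f_def
    by (intro continuous_intros gc)
  obtain z1 where z1: "z1 \<in> K" and min: "\<And>z. z \<in> K \<Longrightarrow> f z1 \<le> f z"
    using continuous_attains_inf[OF Kc Kne fc] by blast
  define c where "c = f z1"
  have "c > 0" unfolding c_def f_def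
    by (rule g_pos) (use z1 e in \<open>auto simp: K_def\<close>)
  moreover have "c * (norm \<xi>)^2 \<le> (\<Sum>i\<in>UNIV. \<Sum>j\<in>UNIV. g q i j * \<xi> $ i * \<xi> $ j)"
    if q: "q \<in> cball q0 e" for q \<xi>
  proof (cases "\<xi> = 0")
    case True then show ?thesis by simp
  next
    case False
    define \<eta> where "\<eta> = (1 / norm \<xi>) *\<^sub>R \<xi>"
    have n1: "norm \<eta> = 1" unfolding \<eta>_def using False by simp
    have "(q, \<eta>) \<in> K" unfolding K_def using q n1 by simp
    then have "c \<le> f (q, \<eta>)" unfolding c_def by (rule min)
    then have "c * (norm \<xi>)^2 \<le> f (q, \<eta>) * (norm \<xi>)^2" by (rule mult_right_mono) simp
    also have "f (q, \<eta>) * (norm \<xi>)^2 = (\<Sum>i\<in>UNIV. \<Sum>j\<in>UNIV. g q i j * \<xi> $ i * \<xi> $ j)"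
    proof -
      have xi: "norm \<xi> *\<^sub>R \<eta> = \<xi>" unfolding \<eta>_def using False by simp
      have "(\<Sum>i\<in>UNIV. \<Sum>j\<in>UNIV. g q i j * (norm \<xi> *\<^sub>R \<eta>) $ i * (norm \<xi> *\<^sub>R \<eta>) $ j)
          = (norm \<xi>)^2 * (\<Sum>i\<in>UNIV. \<Sum>j\<in>UNIV. g q i j * \<eta> $ i * \<eta> $ j)"
        by (rule quad_scale)
      then show ?thesis unfolding f_def xi by (simp add: mult.commute)
    qed
    finally show ?thesis .
  qed
  ultimately show ?thesis using e by blast
qed

definition Bv :: "(real^'n) \<times> (real^'n) \<Rightarrow> real^'n" where
  "Bv z = (\<chi> i. Q1 g a v (fst z) (snd z) i + gyro_force C g (fst z) (snd z) i
      - (\<Sum>j\<in>UNIV. (\<Sum>k\<in>UNIV. pd (\<lambda>x. g x i j) (fst z) k * snd z $ k) * snd z $ j)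
      - (\<Sum>k\<in>UNIV. pd (\<lambda>x. a x i) (fst z) k * snd z $ k))"

definition Phi :: "(real^'n) \<times> (real^'n) \<Rightarrow> real^'n" where
  "Phi z = (SOME \<xi>. Gv g (fst z) \<xi> = Bv z)"

definition Psi :: "(real^'n) \<times> (real^'n) \<Rightarrow> (real^'n) \<times> (real^'n)" where
  "Psi z = (snd z, Phi z)"

lemma Phi_eq: "fst z \<in> U \<Longrightarrow> Gv g (fst z) (Phi z) = Bv z"
  unfolding Phi_def by (rule someI_ex[OF Gv_surj])

lemma LL_B:
  fixes z0 :: "(real^'n) \<times> (real^'n)"
  assumes z0: "fst z0 \<in> U"
  shows "LLat z0 (\<lambda>z. Bv z $ i)"
proof -
  have LLg: "LLat z0 (\<lambda>z. g (fst z) i j)" for i j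
    using LLat_fst_smooth[of U "\<lambda>q. g q i j" z0] g_smooth U_open z0 by simp
  have LLpg: "LLat z0 (\<lambda>z. pd (\<lambda>x. g x j k) (fst z) i)" for i j k
    using LLat_fst_smooth[of U "\<lambda>q. pd (\<lambda>x. g x j k) q i" z0] smooth_pd[OF g_smooth U_open] U_open z0 by simp
  have LLpa: "LLat z0 (\<lambda>z. pd (\<lambda>x. a x j) (fst z) i)" for i j
    using LLat_fst_smooth[of U "\<lambda>q. pd (\<lambda>x. a x j) q i" z0] smooth_pd[OF a_smooth U_open] U_open z0 by simp
  have LLpv: "LLat z0 (\<lambda>z. pd v (fst z) i)" for i
    using LLat_fst_smooth[of U "\<lambda>q. pd v q i" z0] smooth_pd[OF v_smooth U_open] U_open z0 by simp
  have LLC: "LLat z0 (\<lambda>z. C (fst z) k i j)" for i j k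
    using LLat_fst_smooth[of U "\<lambda>q. C q k i j" z0] C_smooth U_open z0 by simp
  show ?thesis
    unfolding Bv_def Q1_def gyro_force_def vec_lambda_beta
    by (intro LLat_add LLat_diff LLat_mult LLat_sum LLat_const LLat_snd LLg LLpg LLpa LLpv LLC)
qed

end

lemma Gv_diff_bound:
  fixes \<xi> :: "real^'n"
  assumes "\<And>i j. \<bar>g q1 i j - g q2 i j\<bar> \<le> D"
  shows "norm (Gv g q1 \<xi> - Gv g q2 \<xi>) \<le> real CARD('n) * real CARD('n) * D * norm \<xi>"
proof -
  have "norm (Gv g q1 \<xi> - Gv g q2 \<xi>) \<le> (\<Sum>i\<in>UNIV. \<bar>(Gv g q1 \<xi> - Gv g q2 \<xi>) $ i\<bar>)"
    by (rule norm_le_l1_cart)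
  also have "\<dots> \<le> (\<Sum>i::'n\<in>UNIV. real CARD('n) * D * norm \<xi>)"
  proof (rule sum_mono)
    fix i
    have D0: "0 \<le> D" using abs_ge_zero[of "g q1 i i - g q2 i i"] assms[of i i] by linarith
    have "(Gv g q1 \<xi> - Gv g q2 \<xi>) $ i = (\<Sum>j\<in>UNIV. (g q1 i j - g q2 i j) * \<xi> $ j)"
      unfolding Gv_def by (simp add: sum_subtractf algebra_simps)
    also have "\<bar>\<dots>\<bar> \<le> (\<Sum>j\<in>UNIV. \<bar>(g q1 i j - g q2 i j) * \<xi> $ j\<bar>)" by (rule sum_abs)
    also have "\<dots> \<le> (\<Sum>j::'n\<in>UNIV. D * norm \<xi>)"
      unfolding abs_mult using assms D0 by (intro sum_mono mult_mono) (auto simp: component_le_norm_cart)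
    also have "\<dots> = real CARD('n) * D * norm \<xi>" by simp
    finally show "\<bar>(Gv g q1 \<xi> - Gv g q2 \<xi>) $ i\<bar> \<le> real CARD('n) * D * norm \<xi>" .
  qed
  also have "\<dots> = real CARD('n) * real CARD('n) * D * norm \<xi>" by simp
  finally show ?thesis .
qed

context sys begin

lemma Psi_lip:
  fixes z0 :: "(real^'n) \<times> (real^'n)"
  assumes z0: "fst z0 \<in> U"
  shows "\<exists>r>0. cball (fst z0) r \<subseteq> U \<and> (\<exists>L\<ge>0. \<forall>p\<in>cball z0 r. \<forall>q\<in>cball z0 r. norm (Psi p - Psi q) \<le> L * norm (p - q))"
proof -
  obtain eB LB where eB: "eB > 0" "LB \<ge> 0"
    and LB: "\<forall>i\<in>UNIV. \<forall>p\<in>cball z0 eB. \<forall>q\<in>cball z0 eB. \<bar>Bv p $ i - Bv q $ i\<bar> \<le> LB * dist p q"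
    using LLat_all[of UNIV z0 "\<lambda>i z. Bv z $ i"] LL_B[OF z0] by auto
  have LLg: "LLat z0 (\<lambda>z. g (fst z) (fst ij) (snd ij))" for ij :: "'n \<times> 'n"
    using LLat_fst_smooth[of U "\<lambda>q. g q (fst ij) (snd ij)" z0] g_smooth U_open z0 by simp
  obtain eG LG where eG: "eG > 0" "LG \<ge> 0"
    and LG: "\<forall>ij\<in>UNIV. \<forall>p\<in>cball z0 eG. \<forall>q\<in>cball z0 eG. \<bar>g (fst p) (fst ij) (snd ij) - g (fst q) (fst ij) (snd ij)\<bar> \<le> LG * dist p q"
    using LLat_all[of "UNIV :: ('n \<times> 'n) set" z0 "\<lambda>ij z. g (fst z) (fst ij) (snd ij)"] LLg by auto
  obtain eC c where eC: "eC > 0" "cball (fst z0) eC \<subseteq> U" and c: "c > 0"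
    and co: "\<And>q \<xi>. q \<in> cball (fst z0) eC \<Longrightarrow> c * (norm \<xi>)^2 \<le> (\<Sum>i\<in>UNIV. \<Sum>j\<in>UNIV. g q i j * \<xi> $ i * \<xi> $ j)"
    using coercive[OF z0] by blast
  define r where "r = min eB (min eG eC)"
  have r: "r > 0" "r \<le> eB" "r \<le> eG" "r \<le> eC" unfolding r_def using eB eG eC by auto
  have fstin: "fst p \<in> cball (fst z0) eC" if "p \<in> cball z0 r" for p
    using that dist_fst_le[of z0 p] r by auto
  have fstU: "fst p \<in> U" if "p \<in> cball z0 r" for p using fstin[OF that] eC by auto
  define n where "n = real CARD('n)"
  have n0: "n \<ge> 0" unfolding n_def by simp
  define MB where "MB = (\<Sum>i\<in>UNIV. \<bar>Bv z0 $ i\<bar> + LB * r)"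
  have MB: "norm (Bv p) \<le> MB" if p: "p \<in> cball z0 r" for p
  proof -
    have "norm (Bv p) \<le> (\<Sum>i\<in>UNIV. \<bar>Bv p $ i\<bar>)" by (rule norm_le_l1_cart)
    also have "\<dots> \<le> MB" unfolding MB_def
    proof (rule sum_mono)
      fix i
      have pB: "p \<in> cball z0 eB" using p r by auto
      have "\<bar>Bv p $ i - Bv z0 $ i\<bar> \<le> LB * dist p z0" using LB pB eB(1) by simp
      also have "\<dots> \<le> LB * r" using p eB by (intro mult_left_mono) (auto simp: dist_commute)
      finally show "\<bar>Bv p $ i\<bar> \<le> \<bar>Bv z0 $ i\<bar> + LB * r" by linarith
    qed
    finally show ?thesis .
  qed
  have "z0 \<in> cball z0 r" using r by simp
  then have "norm (Bv z0) \<le> MB" by (rule MB)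
  then have MB0: "MB \<ge> 0" using norm_ge_zero[of "Bv z0"] by linarith
  have conorm: "c * norm \<xi> \<le> norm (Gv g (fst p) \<xi>)" if p: "p \<in> cball z0 r" for p \<xi>
  proof (cases "\<xi> = 0")
    case True then show ?thesis by simp
  next
    case False
    have "c * (norm \<xi>)^2 \<le> \<xi> \<bullet> Gv g (fst p) \<xi>" unfolding Gv_inner by (rule co[OF fstin[OF p]])
    also have "\<dots> \<le> norm \<xi> * norm (Gv g (fst p) \<xi>)" by (rule norm_cauchy_schwarz)
    finally have "(c * norm \<xi>) * norm \<xi> \<le> norm (Gv g (fst p) \<xi>) * norm \<xi>"
      by (simp add: power2_eq_square mult_ac)
    then show ?thesis using False by simp
  qed
  have Phib: "norm (Phi p) \<le> MB / c" if p: "p \<in> cball z0 r" for p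
  proof -
    have "c * norm (Phi p) \<le> MB" using conorm[OF p, of "Phi p"] Phi_eq[OF fstU[OF p]] MB[OF p] by simp
    then show ?thesis using c by (simp add: field_simps)
  qed
  define K where "K = (n * LB + n * n * LG * (MB / c)) / c"
  have K0: "K \<ge> 0" unfolding K_def using n0 eB eG MB0 c by simp
  have Philip: "norm (Phi p - Phi q) \<le> K * dist p q" if p: "p \<in> cball z0 r" and q: "q \<in> cball z0 r" for p q
  proof -
    have pG: "p \<in> cball z0 eG" "q \<in> cball z0 eG" using p q r by auto
    have pB: "p \<in> cball z0 eB" "q \<in> cball z0 eB" using p q r by auto
    have gb: "\<bar>g (fst q) i j - g (fst p) i j\<bar> \<le> LG * dist p q" for i j
    proof -
      have "\<bar>g (fst p) (fst (i,j)) (snd (i,j)) - g (fst q) (fst (i,j)) (snd (i,j))\<bar> \<le> LG * dist p q"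
        using LG pG by blast
      then show ?thesis by (simp add: abs_minus_commute)
    qed
    have "c * norm (Phi p - Phi q) \<le> norm (Gv g (fst p) (Phi p - Phi q))" by (rule conorm[OF p])
    also have "Gv g (fst p) (Phi p - Phi q) = (Bv p - Bv q) + (Gv g (fst q) (Phi q) - Gv g (fst p) (Phi q))"
      using Phi_eq[OF fstU[OF p]] Phi_eq[OF fstU[OF q]] by (simp add: Gv_diff)
    also have "norm \<dots> \<le> norm (Bv p - Bv q) + norm (Gv g (fst q) (Phi q) - Gv g (fst p) (Phi q))"
      by (rule norm_triangle_ineq)
    also have "\<dots> \<le> n * (LB * dist p q) + n * n * (LG * dist p q) * (MB / c)"
    proof (rule add_mono)
      have "norm (Bv p - Bv q) \<le> (\<Sum>i\<in>UNIV. \<bar>(Bv p - Bv q) $ i\<bar>)" by (rule norm_le_l1_cart)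
      also have "\<dots> \<le> (\<Sum>i::'n\<in>UNIV. LB * dist p q)" using LB pB by (intro sum_mono) simp
      finally show "norm (Bv p - Bv q) \<le> n * (LB * dist p q)" unfolding n_def by simp
      have "norm (Gv g (fst q) (Phi q) - Gv g (fst p) (Phi q)) \<le> n * n * (LG * dist p q) * norm (Phi q)"
        unfolding n_def by (rule Gv_diff_bound[OF gb])
      also have "\<dots> \<le> n * n * (LG * dist p q) * (MB / c)"
        using Phib[OF q] n0 eG by (intro mult_left_mono) auto
      finally show "norm (Gv g (fst q) (Phi q) - Gv g (fst p) (Phi q)) \<le> n * n * (LG * dist p q) * (MB / c)" .
    qed
    also have "\<dots> = c * (K * dist p q)" unfolding K_def using c by (simp add: field_simps)
    finally show ?thesis using c by simp
  qed
  have final: "norm (Psi p - Psi q) \<le> (1 + K) * norm (p - q)"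
    if p: "p \<in> cball z0 r" and q: "q \<in> cball z0 r" for p q
  proof -
    have "Psi p - Psi q = (snd p - snd q, Phi p - Phi q)" unfolding Psi_def by simp
    then have "norm (Psi p - Psi q) \<le> norm (snd p - snd q) + norm (Phi p - Phi q)"
      using norm_Pair_le[of "snd p - snd q" "Phi p - Phi q"] by simp
    also have "\<dots> \<le> dist p q + K * dist p q"
      using dist_snd_le[of p q] Philip[OF p q] by (simp add: dist_norm)
    also have "\<dots> = (1 + K) * norm (p - q)" by (simp add: dist_norm algebra_simps)
    finally show "norm (Psi p - Psi q) \<le> (1 + K) * norm (p - q)" .
  qed
  have cb: "cball (fst z0) r \<subseteq> U" using eC r by auto
  have K1: "1 + K \<ge> 0" using K0 by simp
  show ?thesis using r(1) cb K1 final by blast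
qed

lemma ode_sol:
  assumes q0: "q0 \<in> U"
  shows "\<exists>h>0. \<exists>x. x 0 = q0 \<and> vector_derivative x (at 0) = w0 \<and> x ` {-h<..<h} \<subseteq> U
     \<and> EL_solution (lag1 g a v) (gyro_force C g) {-h<..<h} x"
proof -
  define z0 where "z0 = (q0, w0)"
  have fz: "fst z0 \<in> U" using q0 by (simp add: z0_def)
  obtain r where r: "r > 0" "cball (fst z0) r \<subseteq> U"
    and ex: "\<exists>L\<ge>0. \<forall>p\<in>cball z0 r. \<forall>q\<in>cball z0 r. norm (Psi p - Psi q) \<le> L * norm (p - q)"
    using Psi_lip[OF fz] by blast
  obtain L where L: "L \<ge> 0"
    and lip0: "\<forall>p\<in>cball z0 r. \<forall>q\<in>cball z0 r. norm (Psi p - Psi q) \<le> L * norm (p - q)"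
    using ex by blast
  have lip: "\<And>p q. p \<in> cball z0 r \<Longrightarrow> q \<in> cball z0 r \<Longrightarrow> norm (Psi p - Psi q) \<le> L * norm (p - q)"
    using lip0 by blast
  obtain h z where h: "h > 0" and z0: "z 0 = z0"
    and z: "\<And>t. t \<in> {-h<..<h} \<Longrightarrow> z t \<in> cball z0 r \<and> (z has_vector_derivative Psi (z t)) (at t)"
    using picard_local[OF r(1) L lip] by blast
  define x where "x s = fst (z s)" for s
  define w where "w s = snd (z s)" for s
  define I where "I = {-h<..<h}"
  have Io: "open I" unfolding I_def by simp
  have xU: "x t \<in> U" if "t \<in> I" for t
  proof -
    have "dist (fst z0) (fst (z t)) \<le> r" using z[of t] that dist_fst_le[of z0 "z t"] unfolding I_def by auto
    then have "x t \<in> cball (fst z0) r" unfolding x_def by simp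
    then show ?thesis using r by blast
  qed
  have zd: "(z has_derivative (\<lambda>s. s *\<^sub>R Psi (z t))) (at t)" if "t \<in> I" for t
    using z[of t] that unfolding I_def has_vector_derivative_def by auto
  have xv: "(x has_vector_derivative w t) (at t)" if t: "t \<in> I" for t
    using has_derivative_fst[OF zd[OF t]] unfolding has_vector_derivative_def x_def w_def Psi_def
    by (simp add: o_def)
  have wj: "((\<lambda>s. w s $ j) has_real_derivative Phi (z t) $ j) (at t)" if t: "t \<in> I" for t j
  proof -
    have "((\<lambda>s. snd (z s)) has_derivative (\<lambda>s. snd (s *\<^sub>R Psi (z t)))) (at t)"
      by (rule has_derivative_snd[OF zd[OF t]])
    from has_derivative_vnth[OF this, of j]
    have "((\<lambda>s. snd (z s) $ j) has_derivative (\<lambda>h. h * Phi (z t) $ j)) (at t)"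
      unfolding Psi_def by simp
    moreover have "(\<lambda>h. h * Phi (z t) $ j) = (*) (Phi (z t) $ j)" by (auto simp: fun_eq_iff)
    ultimately show ?thesis unfolding has_field_derivative_def w_def by simp
  qed
  have x'eq: "vector_derivative x (at t) = w t" if "t \<in> I" for t
    using xv[OF that] by (rule vector_derivative_at)
  have EL: "EL_solution (lag1 g a v) (gyro_force C g) I x"
    unfolding EL_solution_def
  proof (intro conjI ballI allI)
    fix t assume t: "t \<in> I"
    show "x differentiable at t" using xv[OF t] by (auto intro: differentiableI_vector)
  next
    fix t i assume t: "t \<in> I"
    have xI: "x ` I \<subseteq> U" using xU by auto
    have dg: "((\<lambda>s. g (x s) i j) has_real_derivative (\<Sum>k\<in>UNIV. pd (\<lambda>x. g x i j) (x t) k * w t $ k)) (at t)" for j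
      by (rule chain_smooth[OF g_smooth U_open xU[OF t] xv[OF t]])
    have da: "((\<lambda>s. a (x s) i) has_real_derivative (\<Sum>k\<in>UNIV. pd (\<lambda>x. a x i) (x t) k * w t $ k)) (at t)"
      by (rule chain_smooth[OF a_smooth U_open xU[OF t] xv[OF t]])
    have "((\<lambda>s. (\<Sum>j\<in>UNIV. g (x s) i j * w s $ j) + a (x s) i) has_real_derivative
        (\<Sum>j\<in>UNIV. (\<Sum>k\<in>UNIV. pd (\<lambda>x. g x i j) (x t) k * w t $ k) * w t $ j + Phi (z t) $ j * g (x t) i j)
        + (\<Sum>k\<in>UNIV. pd (\<lambda>x. a x i) (x t) k * w t $ k)) (at t)"
      by (intro DERIV_add DERIV_sum DERIV_mult dg da wj[OF t])
    moreover have "(\<Sum>j\<in>UNIV. (\<Sum>k\<in>UNIV. pd (\<lambda>x. g x i j) (x t) k * w t $ k) * w t $ j + Phi (z t) $ j * g (x t) i j)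
        + (\<Sum>k\<in>UNIV. pd (\<lambda>x. a x i) (x t) k * w t $ k)
        = Q1 g a v (x t) (w t) i + gyro_force C g (x t) (w t) i"
    proof -
      have "(\<Sum>j\<in>UNIV. Phi (z t) $ j * g (x t) i j) = Gv g (fst (z t)) (Phi (z t)) $ i"
        unfolding Gv_def x_def by (simp add: mult.commute)
      also have "\<dots> = Bv (z t) $ i" using Phi_eq[of "z t"] xU[OF t] unfolding x_def by simp
      finally have "(\<Sum>j\<in>UNIV. Phi (z t) $ j * g (x t) i j) = Bv (z t) $ i" .
      then show ?thesis unfolding Bv_def x_def w_def by (simp add: sum.distrib)
    qed
    ultimately have "((\<lambda>s. P1 g a (x s) (w s) i) has_real_derivative
        Q1 g a v (x t) (w t) i + gyro_force C g (x t) (w t) i) (at t)"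
      unfolding P1_def by simp
    then have "((\<lambda>s. P1 g a (x s) (vector_derivative x (at s)) i) has_real_derivative
        Q1 g a v (x t) (w t) i + gyro_force C g (x t) (w t) i) (at t)"
      by (rule has_field_derivative_transform_within_open[OF _ Io t]) (use x'eq in simp)
    then show "((\<lambda>s. pdp (lag1 g a v) (x s) (vector_derivative x (at s)) i) has_real_derivative
        pdq (lag1 g a v) (x t) (vector_derivative x (at t)) i + gyro_force C g (x t) (vector_derivative x (at t)) i) (at t)"
      using P1_transform[OF Io xI t] pdq_lag1[OF U_open xU[OF t] g_smooth a_smooth v_smooth] x'eq[OF t] by simp
  qed
  have "0 \<in> I" unfolding I_def using h by simp
  then have "x 0 = q0" "vector_derivative x (at 0) = w0"
    using z0 x'eq unfolding x_def w_def z0_def by auto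
  then show ?thesis using h EL xU unfolding I_def by blast
qed

lemma becomes_only_if:
  assumes B: "becomes U N (lag1 g a v) (gyro_force C g) (lag1_star N g a v)" and q0: "q0 \<in> U"
  shows "Res q0 w0 i = 0"
proof -
  obtain h x where h: "h > 0" and x0: "x 0 = q0" and x'0: "vector_derivative x (at 0) = w0"
    and xU: "x ` {-h<..<h} \<subseteq> U" and EL: "EL_solution (lag1 g a v) (gyro_force C g) {-h<..<h} x"
    using ode_sol[OF q0, of w0] by blast
  define h2 where "h2 = h / 2"
  have h2: "h2 > 0" "h2 < h" unfolding h2_def using h by auto
  define I where "I = {-h2<..<h2}"
  have Io: "open I" unfolding I_def by simp
  have Ii: "is_interval I" unfolding I_def is_interval_1 by auto
  have IS: "I \<subseteq> {-h<..<h}" unfolding I_def using h2 by auto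
  have CS: "{-h2..h2} \<subseteq> {-h<..<h}" using h2 by auto
  have xI: "x ` I \<subseteq> U" using xU IS by auto
  have xdiff: "x differentiable at t" if "t \<in> {-h<..<h}" for t using EL that unfolding EL_solution_def by auto
  have xcont: "continuous_on {-h2..h2} x"
    using xdiff CS by (intro continuous_at_imp_continuous_on ballI differentiable_imp_continuous_within) auto
  have Nxc: "continuous_on {-h2..h2} (\<lambda>s. N (x s))"
    by (rule continuous_on_compose2[OF smooth_cont[OF N_smooth U_open] xcont]) (use xU CS in auto)
  define \<sigma> where "\<sigma> t = integral {-h2..t} (\<lambda>s. N (x s))" for t
  have sig: "\<forall>t\<in>I. (\<sigma> has_real_derivative N (x t)) (at t)"
  proof
    fix t assume t: "t \<in> I"
    have "(\<sigma> has_vector_derivative N (x t)) (at t within {-h2..h2})"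
      unfolding \<sigma>_def by (rule integral_has_vector_derivative[OF Nxc]) (use t I_def in auto)
    then have "(\<sigma> has_vector_derivative N (x t)) (at t)"
      using t unfolding I_def by (subst (asm) at_within_interior[of t]) auto
    then show "(\<sigma> has_real_derivative N (x t)) (at t)"
      by (simp add: has_real_derivative_iff_has_vector_derivative)
  qed
  have Nnz: "N (x t) \<noteq> 0" if "t \<in> I" for t using N_nonzero xI that by auto
  have inj: "inj_on \<sigma> I"
    by (rule time_change(1)[of I \<sigma> "\<lambda>s. N (x s)"]) (use Io Ii sig Nnz in auto)
  define y where "y s = x (inv_into I \<sigma> s)" for s
  have yx: "\<forall>t\<in>I. y (\<sigma> t) = x t" unfolding y_def using inj by simp
  have EL1: "EL_solution (lag1 g a v) (gyro_force C g) I x"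
    using EL IS unfolding EL_solution_def by blast
  have EL2: "EL_solution (lag1_star N g a v) (\<lambda>_ _ _. 0) (\<sigma> ` I) y"
    using B EL1 Io Ii xI sig yx unfolding becomes_def by blast
  have xd0: "\<forall>t\<in>I. x differentiable at t" using xdiff IS by auto
  have t0: "0 \<in> I" unfolding I_def using h2 by auto
  note tr = transfer[OF Io Ii xI sig yx xd0 t0]
  have x0U: "x 0 \<in> U" using xI t0 by auto
  have y'eq: "vector_derivative y (at (\<sigma> 0)) = (1 / N (x 0)) *\<^sub>R vector_derivative x (at 0)"
    using tr(1) by (simp add: vector_derivative_at)
  have d1: "((\<lambda>s. P1 g a (x s) (vector_derivative x (at s)) i) has_real_derivative
      Q1 g a v (x 0) (vector_derivative x (at 0)) i + gyro_force C g (x 0) (vector_derivative x (at 0)) i) (at 0)"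
  proof -
    have "((\<lambda>s. pdp (lag1 g a v) (x s) (vector_derivative x (at s)) i) has_real_derivative
        pdq (lag1 g a v) (x 0) (vector_derivative x (at 0)) i + gyro_force C g (x 0) (vector_derivative x (at 0)) i) (at 0)"
      using EL1 t0 unfolding EL_solution_def by auto
    then show ?thesis
      using P1_transform[OF Io xI t0] pdq_lag1[OF U_open x0U g_smooth a_smooth v_smooth] by simp
  qed
  have "((\<lambda>s. pdp (lag1_star N g a v) (y s) (vector_derivative y (at s)) i) has_real_derivative
      pdq (lag1_star N g a v) (y (\<sigma> 0)) (vector_derivative y (at (\<sigma> 0))) i + 0) (at (\<sigma> 0))"
    using EL2 t0 unfolding EL_solution_def by auto
  then have "((\<lambda>s. pdp (lag1_star N g a v) (y s) (vector_derivative y (at s)) i) has_real_derivative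
      Q1 g a v (x 0) (vector_derivative x (at 0)) i + pd N (x 0) i / N (x 0) * GW g a (x 0) (vector_derivative x (at 0))) (at (\<sigma> 0))"
    using pdq_star_at[OF x0U] y'eq yx t0 by simp
  from tr(3)[OF this] have d2: "((\<lambda>s. P1 g a (x s) (vector_derivative x (at s)) i) has_real_derivative
      Q1 g a v (x 0) (vector_derivative x (at 0)) i + pd N (x 0) i / N (x 0) * GW g a (x 0) (vector_derivative x (at 0))
      - (\<Sum>j\<in>UNIV. pd N (x 0) j * vector_derivative x (at 0) $ j) * P1 g a (x 0) (vector_derivative x (at 0)) i / N (x 0)) (at 0)" .
  from DERIV_unique[OF d1 d2] show ?thesis
    unfolding Res_def x0[symmetric] x'0[symmetric] by linarith
qed

lemma main_iff:
  "becomes U N (lag1 g a v) (gyro_force C g) (lag1_star N g a v) \<longleftrightarrow> (\<forall>q\<in>U. \<forall>w i. Res q w i = 0)"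
  using becomes_if becomes_only_if by blast

end
theorem proposition5p1:
  fixes U :: "(real^'n) set"
    and g :: "real^'n \<Rightarrow> 'n \<Rightarrow> 'n \<Rightarrow> real"
    and a :: "real^'n \<Rightarrow> 'n \<Rightarrow> real"
    and v :: "real^'n \<Rightarrow> real"
    and C :: "real^'n \<Rightarrow> 'n \<Rightarrow> 'n \<Rightarrow> 'n \<Rightarrow> real"
    and N :: "real^'n \<Rightarrow> real"
  assumes U_open: "open U"
    and g_smooth: "\<And>i j. smooth_on U (\<lambda>x. g x i j)"
    and g_sym: "\<And>x i j. x \<in> U \<Longrightarrow> g x i j = g x j i"
    and g_pos: "\<And>x \<xi>. x \<in> U \<Longrightarrow> \<xi> \<noteq> 0 \<Longrightarrow> (\<Sum>i\<in>UNIV. \<Sum>j\<in>UNIV. g x i j * \<xi> $ i * \<xi> $ j) > 0"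
    and a_smooth: "\<And>i. smooth_on U (\<lambda>x. a x i)"
    and v_smooth: "smooth_on U v"
    and C_smooth: "\<And>k i j. smooth_on U (\<lambda>x. C x k i j)"
    and C_skew: "\<And>x k i j. x \<in> U \<Longrightarrow> C x k i j = - C x k j i"
    and N_smooth: "smooth_on U N"
    and N_nonzero: "\<And>x. x \<in> U \<Longrightarrow> N x \<noteq> 0"
  shows "becomes U N (lag1 g a v) (gyro_force C g) (lag1_star N g a v)
         \<longleftrightarrow> chaplygin_multiplier U g v C N
             \<and> (\<forall>x\<in>U. \<forall>i j. a x j * pd N x i = a x i * pd N x j)"
proof -
  interpret A: sys U g a v C N
    by unfold_locales (use assms in auto)
  interpret Z: sys U g "\<lambda>_ _. 0" v C N
    by unfold_locales (use assms smooth_zero in auto)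
  define Nd where "Nd q w = (\<Sum>j\<in>UNIV. pd N q j * w $ j)" for q and w :: "real^'n"
  define Lq where "Lq q w i = (Nd q w * a q i - pd N q i * (\<Sum>j\<in>UNIV. a q j * w $ j)) / N q" for q w i
  have split: "A.Res q w i = Z.Res q w i + Lq q w i" if q: "q \<in> U" for q w i
    using N_nonzero[OF q]
    unfolding A.Res_def Z.Res_def Lq_def Nd_def P1_def GW_def
    by (simp add: field_simps)
  have Zeven: "Z.Res q (- w) i = Z.Res q w i" for q w i
    unfolding Z.Res_def P1_def GW_def gyro_force_def
    by (simp add: sum_negf)
  have Lodd: "Lq q (- w) i = - Lq q w i" for q w i
    unfolding Lq_def Nd_def by (simp add: sum_negf minus_divide_left algebra_simps)
  have Lq_axis: "Lq q (axis j 1) i = (pd N q j * a q i - pd N q i * a q j) / N q" for q i j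
  proof -
    have "Nd q (axis j 1) = pd N q j"
      unfolding Nd_def using sum_axis_mult[of j "\<lambda>k. pd N q k"] by (simp add: mult.commute)
    moreover have "(\<Sum>k\<in>UNIV. a q k * axis j 1 $ k) = a q j"
      using sum_axis_mult[of j "\<lambda>k. a q k"] by (simp add: mult.commute)
    ultimately show ?thesis unfolding Lq_def by simp
  qed
  have Lq_zero: "Lq q w i = 0" if q: "q \<in> U" and b: "\<forall>i j. a q j * pd N q i = a q i * pd N q j" for q w i
  proof -
    have "Nd q w * a q i - pd N q i * (\<Sum>j\<in>UNIV. a q j * w $ j)
        = (\<Sum>j\<in>UNIV. (pd N q j * a q i - pd N q i * a q j) * w $ j)"
      unfolding Nd_def by (simp add: sum_distrib_left sum_distrib_right sum_subtractf algebra_simps)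
    also have "\<dots> = 0" using b by (simp add: mult.commute)
    finally show ?thesis unfolding Lq_def by simp
  qed
  have "(\<forall>q\<in>U. \<forall>w i. A.Res q w i = 0) \<longleftrightarrow>
      (\<forall>q\<in>U. \<forall>w i. Z.Res q w i = 0) \<and> (\<forall>x\<in>U. \<forall>i j. a x j * pd N x i = a x i * pd N x j)"
  proof safe
    fix q w i assume R: "\<forall>q\<in>U. \<forall>w i. A.Res q w i = 0" and q: "q \<in> U"
    have "A.Res q w i = 0" "A.Res q (- w) i = 0" using R q by blast+
    then have "Z.Res q w i + Lq q w i = 0" "Z.Res q w i - Lq q w i = 0"
      using split[OF q, of w i] split[OF q, of "- w" i] Zeven[of q w i] Lodd[of q w i] by simp_all
    then show "Z.Res q w i = 0" by linarith
  next
    fix x i j assume R: "\<forall>q\<in>U. \<forall>w i. A.Res q w i = 0" and x: "x \<in> U"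
    have "Lq x w i = 0" for w
    proof -
      have "A.Res x w i = 0" "A.Res x (- w) i = 0" using R x by blast+
      then have "Z.Res x w i + Lq x w i = 0" "Z.Res x w i - Lq x w i = 0"
        using split[OF x, of w i] split[OF x, of "- w" i] Zeven[of x w i] Lodd[of x w i] by simp_all
      then show ?thesis by linarith
    qed
    from this[of "axis j 1"] have "(pd N x j * a x i - pd N x i * a x j) / N x = 0" using Lq_axis by simp
    then show "a x j * pd N x i = a x i * pd N x j" using N_nonzero[OF x] by (simp add: mult.commute)
  next
    fix q w i assume Z: "\<forall>q\<in>U. \<forall>w i. Z.Res q w i = 0"
      and b: "\<forall>x\<in>U. \<forall>i j. a x j * pd N x i = a x i * pd N x j" and q: "q \<in> U"
    have "Z.Res q w i = 0" using Z q by blast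
    moreover have "Lq q w i = 0" using Lq_zero[OF q] b q by blast
    ultimately show "A.Res q w i = 0" using split[OF q, of w i] by simp
  qed
  then show ?thesis
    unfolding chaplygin_multiplier_def A.main_iff Z.main_iff by simp
qed

end
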